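(* Let $S\subset\hat{\mathcal G}^\ast_-:=\phi^{-1}\mathcal G_+^\perp\oplus\{1\}\subset\hat{\mathcal G}^\ast_1$ be the set of elements $(\mathfrak L,1)$ with \[ \mathfrak{L} = \phi(z)^{-1} \sum_{k=1}^{\infty} z^k \big(k\, A^{(k)} + B^{(k)}\big) \] for some $A,B\in C^\infty(S^1,\mathfrak g)$. Then $S$ is stable under the coadjoint action of $\mathcal G_R$ (i.e. $S$ is a coadjoint orbit-type subset of $\mathcal G_R$ in $\hat{\mathcal G}^\ast_-$): for every $\mathfrak X\in\mathcal G$ and every $(\mathfrak L,1)\in S$, one has $ad_R^\ast\mathfrak X\cdot(\mathfrak L,1)=(\mathfrak L',0)$ with $\mathfrak L'=\phi(z)^{-1}\sum_{k=1}^\infty z^k(k\,A'^{(k)}+B'^{(k)})$ for some $A',B'\in C^\infty(S^1,\mathfrak g)$. In particular, the Lax matrix $\hat{\mathfrak L}=(\mathfrak L,1)$ of the supercoset $\sigma$-model, $\mathfrak L=4\phi(z)^{-1}\sum_{k\ge1}z^k(kA_1^{(k)}+2(\nabla_1\Pi_1)^{(k)})$, belongs to $S$.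
   Context: Setting: $\mathring{\mathfrak g}$ is a Lie superalgebra with automorphism $\Omega$, $\Omega^4=1$, eigenspaces $\mathring{\mathfrak g}_n$, and a non-degenerate invariant graded-symmetric form with $\langle \mathring{\mathfrak g}_n,\mathring{\mathfrak g}_m\rangle=0$ unless $n+m\equiv0\pmod4$; $\mathfrak g=(\Gamma\otimes\mathring{\mathfrak g})_{\bar0}$ its Grassmann envelope, graded $\mathfrak g=\oplus_{n=0}^3\mathfrak g_n$; for $b\in\mathfrak g$ (or a $\mathfrak g$-valued function), $b^{(k)}$ is its component in $\mathfrak g_{(k)}$, $(k)=k\bmod4$. $\mathcal L\mathfrak g^\Omega=\bigoplus_{n\in\mathbb Z}\mathfrak g_{(n)}z^n$ (formal Laurent series, finitely many negative powers), $\mathcal L\mathfrak g^\Omega_+=\bigoplus_{n\ge0}\mathfrak g_{(n)}z^n$, $\mathcal L\mathfrak g^\Omega_-=\bigoplus_{n<0}\mathfrak g_{(n)}z^n$, projections $\pi_\pm$, $R=\pi_+-\pi_-$, and $(\mathcal L\mathfrak g^\Omega_+)^\perp=\bigoplus_{n>0}\mathfrak g_{(n)}z^n$. $\phi(z)=\frac{16z^4}{(1-z^4)^2}$, $(X,Y)_\phi=\oint\frac{dz}{2\pi iz}\phi\langle X,Y\rangle$. $\mathcal G=C^\infty(S^1,\mathcal L\mathfrak g^\Omega)$, $\mathcal G_+^\perp=C^\infty(S^1,(\mathcal L\mathfrak g^\Omega_+)^\perp)$, with $(\!(\mathfrak X,\mathfrak Y)\!)_\phi=\int_{S^1}d\sigma(\mathfrak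 X,\mathfrak Y)_\phi$ and cocycle $\omega(\mathfrak X,\mathfrak Y)=\int d\sigma(\mathfrak X,\partial_\sigma\mathfrak Y)_\phi$. $\hat{\mathcal G}=\mathcal G\oplus\mathbb C$ with bracket $[(\mathfrak X,a),(\mathfrak Y,b)]=([\mathfrak X,\mathfrak Y],\omega(\mathfrak X,\mathfrak Y))$ and pairing $(\!((\mathfrak X,a),(\mathfrak Y,b))\!)_\phi=(\!(\mathfrak X,\mathfrak Y)\!)_\phi+ab$; smooth dual $\hat{\mathcal G}^\ast\simeq\phi^{-1}\mathcal G\oplus\mathbb C$, $\hat{\mathcal G}^\ast_1=\phi^{-1}\mathcal G\oplus\{1\}$. $R(\mathfrak X,c)=(R\mathfrak X,c)$ ($R$ pointwise in $\sigma$); $R$-bracket $[\hat{\mathfrak X},\hat{\mathfrak Y}]_R=\frac12([R\hat{\mathfrak X},\hat{\mathfrak Y}]+[\hat{\mathfrak X},R\hat{\mathfrak Y}])$; $\mathcal G_R$ denotes $\mathcal G$ with this bracket. The coadjoint $R$-action is $(\!(ad_R^\ast(\mathfrak M,c)\cdot(\mathfrak X,a),(\mathfrak Y,b))\!)_\phi=-(\!((\mathfrak X,a),[(\mathfrak M,c),(\mathfrak Y,b)]_R)\!)_\phi$ (independent of $c$). In the Lax matrix, $A_1,\Pi_1\in C^\infty(S^1,\mathfrak g)$ are arbitrary and $\nabla_1=\partial_\sigma-[A_1,\cdot\,]$. *)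

theory Defs
  imports "HOL-Analysis.Analysis" "HOL-Library.Groups_Big_Fun"
begin

(* The Grassmann envelope g, abstracted: a real normed space with a continuous Lie
   bracket br, a Z/4 grading given by projections pr 0..3 onto g_0..g_3 compatible
   with the bracket, and a continuous, symmetric, invariant, non-degenerate form fm
   with <g_n, g_m> = 0 unless n + m = 0 mod 4. *)
definition z4_graded_lie ::
  "('g::real_normed_vector \<Rightarrow> 'g \<Rightarrow> 'g) \<Rightarrow> ('g \<Rightarrow> 'g \<Rightarrow> complex) \<Rightarrow> (nat \<Rightarrow> 'g \<Rightarrow> 'g) \<Rightarrow> bool" where
  "z4_graded_lie br fm pr \<longleftrightarrow>
     bounded_bilinear br \<and>
     (\<forall>x y. br x y = - br y x) \<and>
     (\<forall>x y z. br x (br y z) = br (br x y) z + br y (br x z)) \<and>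
     (\<forall>k<4. bounded_linear (pr k)) \<and>
     (\<forall>j<4. \<forall>k<4. \<forall>x. pr j (pr k x) = (if j = k then pr k x else 0)) \<and>
     (\<forall>x. (\<Sum>k<4. pr k x) = x) \<and>
     (\<forall>j<4. \<forall>k<4. \<forall>x y. pr ((j + k) mod 4) (br (pr j x) (pr k y)) = br (pr j x) (pr k y)) \<and>
     bounded_bilinear fm \<and>
     (\<forall>x y. fm x y = fm y x) \<and>
     (\<forall>x y z. fm (br x y) z = fm x (br y z)) \<and>
     (\<forall>x. (\<forall>y. fm x y = 0) \<longrightarrow> x = 0) \<and>
     (\<forall>j<4. \<forall>k<4. \<forall>x y. (j + k) mod 4 \<noteq> 0 \<longrightarrow> fm (pr j x) (pr k y) = 0)"

definition gcomp :: "(nat \<Rightarrow> 'g \<Rightarrow> 'g) \<Rightarrow> int \<Rightarrow> 'g \<Rightarrow> 'g" where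
  "gcomp pr n x = pr (nat (n mod 4)) x"

definition smooth_S1 :: "(real \<Rightarrow> 'g::real_normed_vector) \<Rightarrow> bool" where
  "smooth_S1 f \<longleftrightarrow> (\<forall>t. f (t + 2 * pi) = f t) \<and>
     (\<exists>D. D 0 = f \<and> (\<forall>k t. (D k has_vector_derivative D (Suc k) t) (at t)))"

(* An element of \<G> = C^\<infinity>(S^1, Lg^\<Omega>) is represented by its coefficient functions:
   X n \<sigma> is the coefficient of z^n at the point \<sigma>. *)
definition in_G :: "(nat \<Rightarrow> 'g \<Rightarrow> 'g) \<Rightarrow> (int \<Rightarrow> real \<Rightarrow> 'g::real_normed_vector) \<Rightarrow> bool" where
  "in_G pr X \<longleftrightarrow> (\<forall>n. smooth_S1 (X n)) \<and> (\<forall>n \<sigma>. gcomp pr n (X n \<sigma>) = X n \<sigma>) \<and>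
     (\<exists>N. \<forall>n. n < - N \<longrightarrow> (\<forall>\<sigma>. X n \<sigma> = 0))"

definition loop_br :: "('g \<Rightarrow> 'g \<Rightarrow> 'g::comm_monoid_add) \<Rightarrow> (int \<Rightarrow> real \<Rightarrow> 'g) \<Rightarrow> (int \<Rightarrow> real \<Rightarrow> 'g) \<Rightarrow> int \<Rightarrow> real \<Rightarrow> 'g" where
  "loop_br br X Y n \<sigma> = Sum_any (\<lambda>m. br (X m \<sigma>) (Y (n - m) \<sigma>))"

definition Rop :: "(int \<Rightarrow> real \<Rightarrow> 'g::ab_group_add) \<Rightarrow> int \<Rightarrow> real \<Rightarrow> 'g" where
  "Rop X n \<sigma> = (if n \<ge> 0 then X n \<sigma> else - X n \<sigma>)"

definition dsig :: "(int \<Rightarrow> real \<Rightarrow> 'g::real_normed_vector) \<Rightarrow> int \<Rightarrow> real \<Rightarrow> 'g" where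
  "dsig X n \<sigma> = vector_derivative (X n) (at \<sigma>)"

(* coefficients of \<phi>(z) = 16 z^4 / (1 - z^4)^2 = \<Sum>_{j\<ge>0} 16 (j+1) z^{4j+4} *)
definition phi_c :: "int \<Rightarrow> complex" where
  "phi_c m = (if 4 \<le> m \<and> 4 dvd m then of_int (4 * m) else 0)"

(* (X,Y)_\<phi> = \<oint> dz/(2\<pi>i z) \<phi> <X,Y> = coefficient of z^0 in \<phi> <X,Y>, at the point \<sigma> *)
definition phi_pair :: "('g \<Rightarrow> 'g \<Rightarrow> complex) \<Rightarrow> (int \<Rightarrow> real \<Rightarrow> 'g) \<Rightarrow> (int \<Rightarrow> real \<Rightarrow> 'g) \<Rightarrow> real \<Rightarrow> complex" where
  "phi_pair fm X Y \<sigma> = Sum_any (\<lambda>m. phi_c m * Sum_any (\<lambda>n. fm (X n \<sigma>) (Y (- m - n) \<sigma>)))"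

definition G_pair :: "('g \<Rightarrow> 'g \<Rightarrow> complex) \<Rightarrow> (int \<Rightarrow> real \<Rightarrow> 'g) \<Rightarrow> (int \<Rightarrow> real \<Rightarrow> 'g) \<Rightarrow> complex" where
  "G_pair fm X Y = integral {0 .. 2 * pi} (phi_pair fm X Y)"

definition omega :: "('g \<Rightarrow> 'g \<Rightarrow> complex) \<Rightarrow> (int \<Rightarrow> real \<Rightarrow> 'g::real_normed_vector) \<Rightarrow> (int \<Rightarrow> real \<Rightarrow> 'g) \<Rightarrow> complex" where
  "omega fm X Y = integral {0 .. 2 * pi} (phi_pair fm X (dsig Y))"

definition hat_br :: "('g \<Rightarrow> 'g \<Rightarrow> 'g) \<Rightarrow> ('g \<Rightarrow> 'g \<Rightarrow> complex) \<Rightarrow>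
    (int \<Rightarrow> real \<Rightarrow> 'g::real_normed_vector) \<times> complex \<Rightarrow> (int \<Rightarrow> real \<Rightarrow> 'g) \<times> complex \<Rightarrow> (int \<Rightarrow> real \<Rightarrow> 'g) \<times> complex" where
  "hat_br br fm Xh Yh = (loop_br br (fst Xh) (fst Yh), omega fm (fst Xh) (fst Yh))"

definition hat_R :: "(int \<Rightarrow> real \<Rightarrow> 'g::ab_group_add) \<times> complex \<Rightarrow> (int \<Rightarrow> real \<Rightarrow> 'g) \<times> complex" where
  "hat_R Xh = (Rop (fst Xh), snd Xh)"

definition hat_brR :: "('g \<Rightarrow> 'g \<Rightarrow> 'g) \<Rightarrow> ('g \<Rightarrow> 'g \<Rightarrow> complex) \<Rightarrow>
    (int \<Rightarrow> real \<Rightarrow> 'g::real_normed_vector) \<times> complex \<Rightarrow> (int \<Rightarrow> real \<Rightarrow> 'g) \<times> complex \<Rightarrow> (int \<Rightarrow> real \<Rightarrow> 'g) \<times> complex" where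
  "hat_brR br fm Xh Yh =
     (let P = hat_br br fm (hat_R Xh) Yh; Q = hat_br br fm Xh (hat_R Yh)
      in ((\<lambda>n \<sigma>. (1/2) *\<^sub>R (fst P n \<sigma> + fst Q n \<sigma>)), (snd P + snd Q) / 2))"

definition hat_pair :: "('g \<Rightarrow> 'g \<Rightarrow> complex) \<Rightarrow> (int \<Rightarrow> real \<Rightarrow> 'g) \<times> complex \<Rightarrow> (int \<Rightarrow> real \<Rightarrow> 'g) \<times> complex \<Rightarrow> complex" where
  "hat_pair fm Lh Yh = G_pair fm (fst Lh) (fst Yh) + snd Lh * snd Yh"

(* multiplication by \<phi>(z)^{-1} = (z^{-4} - 2 + z^4)/16 *)
definition phi_inv_mul :: "(int \<Rightarrow> real \<Rightarrow> 'g::real_vector) \<Rightarrow> int \<Rightarrow> real \<Rightarrow> 'g" where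
  "phi_inv_mul \<psi> n \<sigma> = (1/16) *\<^sub>R (\<psi> (n + 4) \<sigma> - 2 *\<^sub>R \<psi> n \<sigma> + \<psi> (n - 4) \<sigma>)"

definition lax_series :: "(nat \<Rightarrow> 'g \<Rightarrow> 'g) \<Rightarrow> (real \<Rightarrow> 'g::real_vector) \<Rightarrow> (real \<Rightarrow> 'g) \<Rightarrow> int \<Rightarrow> real \<Rightarrow> 'g" where
  "lax_series pr A B k \<sigma> = (if k \<ge> 1 then of_int k *\<^sub>R gcomp pr k (A \<sigma>) + gcomp pr k (B \<sigma>) else 0)"

definition S_form :: "(nat \<Rightarrow> 'g \<Rightarrow> 'g) \<Rightarrow> (int \<Rightarrow> real \<Rightarrow> 'g::real_normed_vector) \<Rightarrow> bool" where
  "S_form pr L \<longleftrightarrow> (\<exists>A B. smooth_S1 A \<and> smooth_S1 B \<and> L = phi_inv_mul (lax_series pr A B))"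

definition S_set :: "(nat \<Rightarrow> 'g \<Rightarrow> 'g) \<Rightarrow> ((int \<Rightarrow> real \<Rightarrow> 'g::real_normed_vector) \<times> complex) set" where
  "S_set pr = {(L, 1) | L. S_form pr L}"

definition nabla1 :: "('g \<Rightarrow> 'g \<Rightarrow> 'g) \<Rightarrow> (real \<Rightarrow> 'g::real_normed_vector) \<Rightarrow> (real \<Rightarrow> 'g) \<Rightarrow> real \<Rightarrow> 'g" where
  "nabla1 br A1 P \<sigma> = vector_derivative P (at \<sigma>) - br (A1 \<sigma>) (P \<sigma>)"

definition lax_matrix :: "('g \<Rightarrow> 'g \<Rightarrow> 'g) \<Rightarrow> (nat \<Rightarrow> 'g \<Rightarrow> 'g) \<Rightarrow> (real \<Rightarrow> 'g::real_normed_vector) \<Rightarrow> (real \<Rightarrow> 'g) \<Rightarrow> int \<Rightarrow> real \<Rightarrow> 'g" where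
  "lax_matrix br pr A1 P1 n \<sigma> =
     4 *\<^sub>R phi_inv_mul (lax_series pr A1 (\<lambda>\<sigma>. 2 *\<^sub>R nabla1 br A1 P1 \<sigma>)) n \<sigma>"

end

theory Submission
  imports Defs
begin


definition sm :: "(real \<Rightarrow> 'a::real_normed_vector) \<Rightarrow> bool" where
  "sm f \<longleftrightarrow> (\<exists>D. D 0 = f \<and> (\<forall>k t. (D k has_vector_derivative D (Suc k) t) (at t)))"

definition vd :: "(real \<Rightarrow> 'a::real_normed_vector) \<Rightarrow> real \<Rightarrow> 'a" where
  "vd f t = vector_derivative f (at t)"

lemma smooth_S1_iff: "smooth_S1 f \<longleftrightarrow> (\<forall>t. f (t + 2 * pi) = f t) \<and> sm f"
  unfolding smooth_S1_def sm_def by simp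

lemma sm_intro:
  assumes P0: "P h" and step: "\<And>h. P h \<Longrightarrow> \<exists>h'. P h' \<and> (\<forall>t. (h has_vector_derivative h' t) (at t))"
  shows "sm h"
proof -
  define st where "st = (\<lambda>h. SOME h'. P h' \<and> (\<forall>t. (h has_vector_derivative h' t) (at t)))"
  have st: "P (st g) \<and> (\<forall>t. (g has_vector_derivative st g t) (at t))" if "P g" for g
    unfolding st_def using someI_ex[OF step[OF that]] by simp
  define D where "D k = (st ^^ k) h" for k
  have PD: "P (D k)" for k by (induction k) (auto simp: D_def P0 st)
  show ?thesis unfolding sm_def
    by (rule exI[of _ D]) (auto simp: D_def st[OF PD[unfolded D_def]])
qed

lemma sm_deriv:
  assumes "sm f"
  shows "(f has_vector_derivative vd f t) (at t)" and "sm (vd f)"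
proof -
  obtain D where D0: "D 0 = f" and D: "\<And>k t. (D k has_vector_derivative D (Suc k) t) (at t)"
    using assms unfolding sm_def by blast
  have e: "vd f = D 1"
    using D[of 0] D0 by (auto simp: vd_def fun_eq_iff intro!: vector_derivative_at)
  show "(f has_vector_derivative vd f t) (at t)" using D[of 0 t] D0 e by simp
  show "sm (vd f)" unfolding sm_def e
    by (rule exI[of _ "\<lambda>k. D (Suc k)"]) (simp add: D)
qed

lemma sm_cont: "sm f \<Longrightarrow> continuous_on S f"
  by (rule continuous_on_vector_derivative) (auto intro: has_vector_derivative_at_within sm_deriv)

lemma sm_const: "sm (\<lambda>t. c)"
  by (rule sm_intro[where P="\<lambda>h. \<exists>c. h = (\<lambda>t. c)"]) (auto intro!: exI[of _ "\<lambda>t. 0"])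

lemma sm_add: "sm f \<Longrightarrow> sm g \<Longrightarrow> sm (\<lambda>t. f t + g t)"
proof (rule sm_intro[where P="\<lambda>h. \<exists>f g. sm f \<and> sm g \<and> h = (\<lambda>t. f t + g t)"])
  fix h assume "\<exists>f g. sm f \<and> sm g \<and> h = (\<lambda>t. f t + g t)"
  then obtain u v where uv: "sm u" "sm v" "h = (\<lambda>t. u t + v t)" by blast
  show "\<exists>h'. (\<exists>f g. sm f \<and> sm g \<and> h' = (\<lambda>t. f t + g t)) \<and> (\<forall>t. (h has_vector_derivative h' t) (at t))"
    using uv by (intro exI[of _ "\<lambda>t. vd u t + vd v t"]) (auto intro!: has_vector_derivative_add sm_deriv)
qed blast

lemma sm_lin: "bounded_linear L \<Longrightarrow> sm f \<Longrightarrow> sm (\<lambda>t. L (f t))"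
proof (rule sm_intro[where P="\<lambda>h. \<exists>f. sm f \<and> h = (\<lambda>t. L (f t))"])
  fix h assume L: "bounded_linear L" and "\<exists>f. sm f \<and> h = (\<lambda>t. L (f t))"
  then obtain u where u: "sm u" "h = (\<lambda>t. L (u t))" by blast
  show "\<exists>h'. (\<exists>f. sm f \<and> h' = (\<lambda>t. L (f t))) \<and> (\<forall>t. (h has_vector_derivative h' t) (at t))"
    using u by (intro exI[of _ "\<lambda>t. L (vd u t)"]) (auto intro!: bounded_linear.has_vector_derivative[OF L] sm_deriv)
qed blast

lemma sm_scaleR: "sm f \<Longrightarrow> sm (\<lambda>t. c *\<^sub>R f t)"
  using sm_lin[OF bounded_linear_scaleR_right] .

lemma sm_minus: "sm f \<Longrightarrow> sm (\<lambda>t. - f t)"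
  using sm_scaleR[of f "-1"] by simp

lemma sm_diff: "sm f \<Longrightarrow> sm g \<Longrightarrow> sm (\<lambda>t. f t - g t)"
  using sm_add[OF _ sm_minus, of f g] by simp

lemma sm_sum: "finite I \<Longrightarrow> (\<And>i. i \<in> I \<Longrightarrow> sm (f i)) \<Longrightarrow> sm (\<lambda>t. \<Sum>i\<in>I. f i t)"
  by (induction I rule: finite_induct) (auto intro: sm_const sm_add)

lemma sm_bil:
  fixes prod :: "'a::real_normed_vector \<Rightarrow> 'b::real_normed_vector \<Rightarrow> 'c::real_normed_vector"
  assumes bb: "bounded_bilinear prod" and f: "sm f" and g: "sm g"
  shows "sm (\<lambda>t. prod (f t) (g t))"
proof -
  let ?P = "\<lambda>h. \<exists>ps. (\<forall>p\<in>set ps. sm (fst p) \<and> sm (snd p)) \<and>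
              h = (\<lambda>t. \<Sum>p\<leftarrow>ps. prod (fst p t) (snd p t))"
  have "?P (\<lambda>t. prod (f t) (g t))"
    by (rule exI[of _ "[(f,g)]"]) (simp add: f g)
  then show ?thesis
  proof (rule sm_intro)
    fix h assume "?P h"
    then obtain ps where ps: "\<forall>p\<in>set ps. sm (fst p) \<and> sm (snd p)"
      and h: "h = (\<lambda>t. \<Sum>p\<leftarrow>ps. prod (fst p t) (snd p t))" by blast
    define qs where "qs = concat (map (\<lambda>p. [(fst p, vd (snd p)), (vd (fst p), snd p)]) ps)"
    have "?P (\<lambda>t. \<Sum>p\<leftarrow>qs. prod (fst p t) (snd p t))"
      using ps by (auto simp: qs_def intro!: exI[of _ qs] sm_deriv)
    moreover have "(h has_vector_derivative (\<Sum>p\<leftarrow>qs. prod (fst p t) (snd p t))) (at t)" for t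
      unfolding h qs_def using ps
    proof (induction ps)
      case Nil then show ?case by simp
    next
      case (Cons p ps)
      have "((\<lambda>t. prod (fst p t) (snd p t)) has_vector_derivative
              prod (fst p t) (vd (snd p) t) + prod (vd (fst p) t) (snd p t)) (at t)"
        using Cons.prems by (auto intro!: bounded_bilinear.has_vector_derivative[OF bb] sm_deriv)
      from has_vector_derivative_add[OF this Cons.IH] Cons.prems show ?case by (simp add: add.assoc)
    qed
    ultimately show "\<exists>h'. ?P h' \<and> (\<forall>t. (h has_vector_derivative h' t) (at t))" by blast
  qed
qed



lemma Sum_any_shift: "Sum_any (\<lambda>k. g (k - c)) = Sum_any (\<lambda>k::int. g k)"
proof -
  have b: "bij (\<lambda>k::int. k - c)" by (intro bij_betw_byWitness[where f'="\<lambda>k. k + c"]) auto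
  have "Sum_any g = Sum_any (\<lambda>k. g (k - c))" by (rule Sum_any.reindex_cong[OF b]) (simp add: o_def)
  then show ?thesis by simp
qed

lemma Sum_any_swap2:
  assumes "finite {(a,b). g a b \<noteq> 0}"
  shows "Sum_any (\<lambda>a. Sum_any (\<lambda>b. g a b)) = Sum_any (\<lambda>b. Sum_any (\<lambda>a. (g a b :: 'c::comm_monoid_add)))"
proof (rule Sum_any.swap)
  let ?S = "{(a,b). g a b \<noteq> 0}"
  show "finite (fst ` ?S \<times> snd ` ?S)" using assms by auto
  show "{a. \<exists>b. g a b \<noteq> 0} \<times> {b. \<exists>a. g a b \<noteq> 0} \<subseteq> fst ` ?S \<times> snd ` ?S"
    by (auto simp: image_iff)
qed

lemma fin_box1: "(\<And>n. g n \<noteq> 0 \<Longrightarrow> lo \<le> n \<and> n \<le> hi) \<Longrightarrow> finite {n::int. g n \<noteq> 0}"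
  by (rule finite_subset[of _ "{lo..hi}"]) auto

lemma fin_box2: "(\<And>a b. g a b \<noteq> 0 \<Longrightarrow> lo \<le> a \<and> a \<le> hi \<and> lo' \<le> b \<and> b \<le> hi') \<Longrightarrow>
   finite {(a::int,b::int). g a b \<noteq> 0}"
  by (rule finite_subset[of _ "{lo..hi} \<times> {lo'..hi'}"]) auto

lemma Sum_any_box: "finite A \<Longrightarrow> (\<And>n. g n \<noteq> 0 \<Longrightarrow> n \<in> A) \<Longrightarrow> Sum_any g = sum g A"
  by (rule Sum_any.expand_superset) auto

lemma blin_sum: "bounded_linear f \<Longrightarrow> f (sum g A) = sum (\<lambda>a. f (g a)) A"
  by (induction A rule: infinite_finite_induct) (auto simp: linear_simps)

lemma Sum_any_lin:
  assumes L: "bounded_linear f" and fin: "finite {a. g a \<noteq> 0}"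
  shows "f (Sum_any g) = Sum_any (\<lambda>a. f (g a))"
proof -
  have "Sum_any g = sum g {a. g a \<noteq> 0}" by (rule Sum_any_box[OF fin]) auto
  moreover have "Sum_any (\<lambda>a. f (g a)) = sum (\<lambda>a. f (g a)) {a. g a \<noteq> 0}"
    by (rule Sum_any_box[OF fin]) (auto simp: linear_simps[OF L])
  ultimately show ?thesis by (simp add: blin_sum[OF L])
qed

lemma Sum_any_diff:
  fixes g h :: "'a \<Rightarrow> 'b::ab_group_add"
  assumes "finite {a. g a \<noteq> 0}" "finite {a. h a \<noteq> 0}"
  shows "Sum_any (\<lambda>a. g a - h a) = Sum_any g - Sum_any h"
proof -
  let ?S = "{a. g a \<noteq> 0} \<union> {a. h a \<noteq> 0}"
  have f: "finite ?S" using assms by simp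
  have "Sum_any (\<lambda>a. g a - h a) = sum (\<lambda>a. g a - h a) ?S" by (rule Sum_any_box[OF f]) auto
  moreover have "Sum_any g = sum g ?S" by (rule Sum_any_box[OF f]) auto
  moreover have "Sum_any h = sum h ?S" by (rule Sum_any_box[OF f]) auto
  ultimately show ?thesis by (simp add: sum_subtractf)
qed

lemma mod4_aux: "(j::nat) < 4 \<Longrightarrow> (nat (p mod 4) = (j + nat (m mod 4)) mod 4) = (j = nat ((p - (m::int)) mod 4))"
proof -
  assume j: "j < 4"
  have "(nat (p mod 4) = (j + nat (m mod 4)) mod 4) = (p mod 4 = (int j + m mod 4) mod 4)"
    by (simp add: nat_eq_iff zmod_int of_nat_mod)
  also have "\<dots> = (p mod 4 = (int j + m) mod 4)" by (simp add: mod_add_right_eq)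
  also have "\<dots> = (4 dvd (p - (int j + m)))" by (simp add: mod_eq_dvd_iff)
  also have "\<dots> = (4 dvd ((p - m) - int j))" by (simp add: algebra_simps)
  also have "\<dots> = ((p - m) mod 4 = int j mod 4)" by (simp add: mod_eq_dvd_iff)
  also have "\<dots> = ((p - m) mod 4 = int j)" using j by simp
  also have "\<dots> = (j = nat ((p - m) mod 4))" by auto
  finally show ?thesis .
qed

locale z4 =
  fixes br :: "'g::real_normed_vector \<Rightarrow> 'g \<Rightarrow> 'g"
    and fm :: "'g \<Rightarrow> 'g \<Rightarrow> complex"
    and pr :: "nat \<Rightarrow> 'g \<Rightarrow> 'g"
  assumes z4: "z4_graded_lie br fm pr"
begin

lemmas Z = z4[unfolded z4_graded_lie_def]
lemma br_bb: "bounded_bilinear br" using Z by (elim conjE) assumption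
lemma fm_bb: "bounded_bilinear fm" using Z by (elim conjE) assumption
lemma fm_inv0: "\<forall>x y z. fm (br x y) z = fm x (br y z)" using Z by (elim conjE) assumption
lemma pr_lin0: "\<forall>k<4. bounded_linear (pr k)" using Z by (elim conjE) assumption
lemma pr_pr0: "\<forall>j<4. \<forall>k<4. \<forall>x. pr j (pr k x) = (if j = k then pr k x else 0)" using Z by (elim conjE) assumption
lemma pr_sum0: "\<forall>x. (\<Sum>k<4. pr k x) = x" using Z by (elim conjE) assumption
lemma pr_br0: "\<forall>j<4. \<forall>k<4. \<forall>x y. pr ((j + k) mod 4) (br (pr j x) (pr k y)) = br (pr j x) (pr k y)"
  using Z by (elim conjE) assumption
lemma fm_inv: "fm (br x y) z = fm x (br y z)" using fm_inv0 by blast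
lemma pr_lin: "k < 4 \<Longrightarrow> bounded_linear (pr k)" using pr_lin0 by blast
lemma pr_pr: "j < 4 \<Longrightarrow> k < 4 \<Longrightarrow> pr j (pr k x) = (if j = k then pr k x else 0)" using pr_pr0 by blast
lemma pr_sum: "(\<Sum>k<4. pr k x) = x" using pr_sum0 by blast
lemma pr_br: "j < 4 \<Longrightarrow> k < 4 \<Longrightarrow> pr ((j + k) mod 4) (br (pr j x) (pr k y)) = br (pr j x) (pr k y)"
  using pr_br0 by blast

interpretation br: bounded_bilinear br by (rule br_bb)
interpretation fm: bounded_bilinear fm by (rule fm_bb)

lemma gc_lin: "bounded_linear (gcomp pr n)"
  unfolding gcomp_def[abs_def] by (rule pr_lin) simp

lemma gc_gc: "gcomp pr p (gcomp pr m x) = (if 4 dvd (p - m) then gcomp pr m x else 0)"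
proof -
  have e: "(nat (p mod 4) = nat (m mod 4)) = (4 dvd (p - m))" by (simp add: eq_nat_nat_iff mod_eq_dvd_iff)
  have a: "nat (p mod 4) < 4" "nat (m mod 4) < 4" by (simp_all add: nat_less_iff)
  have "pr (nat (p mod 4)) (pr (nat (m mod 4)) x) = (if nat (p mod 4) = nat (m mod 4) then pr (nat (m mod 4)) x else 0)"
    by (rule pr_pr[OF a])
  then show ?thesis unfolding gcomp_def e .
qed

lemma gc_br: "gcomp pr p (br x (gcomp pr m y)) = br (gcomp pr (p - m) x) (gcomp pr m y)"
proof -
  let ?q = "nat (m mod 4)" and ?r = "nat (p mod 4)" and ?j0 = "nat ((p - m) mod 4)"
  have q4: "?q < 4" by simp
  have "br x (pr ?q y) = (\<Sum>j<4. br (pr j x) (pr ?q y))"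
    by (subst (1) pr_sum[symmetric, of x]) (simp add: br.sum_left)
  then have "pr ?r (br x (pr ?q y)) = (\<Sum>j<4. pr ?r (br (pr j x) (pr ?q y)))"
    by (simp add: blin_sum[OF pr_lin])
  also have "\<dots> = (\<Sum>j<4. if j = ?j0 then br (pr j x) (pr ?q y) else 0)"
  proof (rule sum.cong[OF refl])
    fix j assume j: "j \<in> {..<4::nat}"
    have e: "pr ?r (br (pr j x) (pr ?q y)) = pr ?r (pr ((j + ?q) mod 4) (br (pr j x) (pr ?q y)))"
      using j q4 pr_br by simp
    have c: "(?r = (j + ?q) mod 4) = (j = ?j0)" using j by (intro mod4_aux) simp
    show "pr ?r (br (pr j x) (pr ?q y)) = (if j = ?j0 then br (pr j x) (pr ?q y) else 0)"
    proof -
      have r4: "?r < 4" by (simp add: nat_less_iff)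
      have m4: "(j + ?q) mod 4 < 4" by simp
      have "pr ?r (pr ((j + ?q) mod 4) (br (pr j x) (pr ?q y))) =
         (if ?r = (j + ?q) mod 4 then pr ((j + ?q) mod 4) (br (pr j x) (pr ?q y)) else 0)"
        by (rule pr_pr[OF r4 m4])
      also have "\<dots> = (if j = ?j0 then br (pr j x) (pr ?q y) else 0)"
        unfolding c using j q4 by (auto simp: pr_br)
      finally show ?thesis unfolding e .
    qed
  qed
  also have "\<dots> = br (pr ?j0 x) (pr ?q y)"
  proof -
    have "?j0 < 4" by (simp add: nat_less_iff)
    then show ?thesis by simp
  qed
  finally show ?thesis unfolding gcomp_def .
qed

end


definition phr :: "int \<Rightarrow> real" where
  "phr m = (if 4 \<le> m \<and> 4 dvd m then 4 * of_int m else 0)"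

lemma phi_c_phr: "phi_c m = complex_of_real (phr m)"
  by (simp add: phi_c_def phr_def)

lemma tele_ind:
  fixes S :: "int \<Rightarrow> complex"
  shows "(\<Sum>i\<in>{1..K}. of_nat i * (S (4 * int i - 4) - 2 * S (4 * int i) + S (4 * int i + 4)))
     = S 0 - of_nat (K + 1) * S (4 * int K) + of_nat K * S (4 * int K + 4)"
proof (induction K)
  case 0 then show ?case by simp
next
  case (Suc K)
  have e: "4 * int (Suc K) - 4 = 4 * int K" "4 * int (Suc K) = 4 * int K + 4"
    "4 * int (Suc K) + 4 = 4 * int K + 8" by auto
  show ?case using Suc by (simp add: e algebra_simps)
qed

lemma tele:
  fixes S :: "int \<Rightarrow> complex"
  assumes S: "\<And>m. m \<ge> B \<Longrightarrow> S m = 0"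
  shows "Sum_any (\<lambda>m. phi_c m * ((S (m - 4) - 2 * S m + S (m + 4)) / 16)) = S 0"
proof -
  define K where "K = nat B + 1"
  let ?A = "(\<lambda>i. 4 * int i) ` {1..K}"
  have "Sum_any (\<lambda>m. phi_c m * ((S (m - 4) - 2 * S m + S (m + 4)) / 16))
      = sum (\<lambda>m. phi_c m * ((S (m - 4) - 2 * S m + S (m + 4)) / 16)) ?A"
  proof (rule Sum_any_box)
    show "finite ?A" by simp
    fix m assume nz: "phi_c m * ((S (m - 4) - 2 * S m + S (m + 4)) / 16) \<noteq> 0"
    then have m4: "4 \<le> m" "4 dvd m" by (auto simp: phi_c_def split: if_splits)
    from m4(2) obtain q where q: "m = 4 * q" by (elim dvdE)
    with m4(1) have "q \<ge> 1" by simp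
    then obtain i where i: "m = 4 * int i" using q by (intro that[of "nat q"]) simp
    have "i \<ge> 1" using m4 i by simp
    moreover have "i \<le> K"
    proof (rule ccontr)
      assume "\<not> i \<le> K"
      then have "m - 4 \<ge> B" "m \<ge> B" "m + 4 \<ge> B" using i unfolding K_def by auto
      then show False using nz S by simp
    qed
    ultimately show "m \<in> ?A" using i by auto
  qed
  also have "\<dots> = (\<Sum>i\<in>{1..K}. of_nat i * (S (4 * int i - 4) - 2 * S (4 * int i) + S (4 * int i + 4)))"
    by (subst sum.reindex) (auto simp: inj_on_def phi_c_def)
  also have "\<dots> = S 0" unfolding tele_ind using S[of "4 * int K"] S[of "4 * int K + 4"]
    unfolding K_def by simp
  finally show ?thesis .
qed



lemma Sum_any_divide:
  fixes g :: "'a \<Rightarrow> 'b::field"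
  assumes f: "finite {a. g a \<noteq> 0}"
  shows "Sum_any (\<lambda>n. g n / c) = Sum_any g / c"
proof -
  have "Sum_any (\<lambda>n. g n / c) = sum (\<lambda>n. g n / c) {a. g a \<noteq> 0}" by (rule Sum_any_box[OF f]) auto
  moreover have "Sum_any g = sum g {a. g a \<noteq> 0}" by (rule Sum_any_box[OF f]) auto
  ultimately show ?thesis by (simp add: sum_divide_distrib)
qed

context z4 begin

interpretation br: bounded_bilinear br by (rule br_bb)
interpretation fm: bounded_bilinear fm by (rule fm_bb)
lemmas [simp] = fm.zero_left fm.zero_right br.zero_left br.zero_right

lemma fm_scaleR_left: "fm (c *\<^sub>R x) y = complex_of_real c * fm x y"
  by (simp add: fm.scaleR_left scaleR_conv_of_real)

lemma phi_inv_pair: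
  assumes L0: "\<And>k. k \<le> 0 \<Longrightarrow> Lam k \<sigma> = 0" and W0: "\<And>j. j < - b \<Longrightarrow> W j \<sigma> = 0"
  shows "phi_pair fm (phi_inv_mul Lam) W \<sigma> = Sum_any (\<lambda>k. fm (Lam k \<sigma>) (W (- k) \<sigma>))"
proof -
  define S where "S m = Sum_any (\<lambda>k. fm (Lam k \<sigma>) (W (- m - k) \<sigma>))" for m
  have Sz: "S m = 0" if "m \<ge> b" for m
  proof -
    have "fm (Lam k \<sigma>) (W (- m - k) \<sigma>) = 0" for k
    proof (cases "k \<le> 0")
      case True then show ?thesis by (simp add: L0)
    next
      case False
      then have "- m - k < - b" using that by linarith
      then show ?thesis by (simp add: W0)
    qed
    then show ?thesis unfolding S_def by simp
  qed
  have fin: "finite {n. fm (Lam (n + c) \<sigma>) (W (- m - n) \<sigma>) \<noteq> 0}" for c m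
  proof (rule fin_box1[of _ "- c" "b - m"])
    fix n assume "fm (Lam (n + c) \<sigma>) (W (- m - n) \<sigma>) \<noteq> 0"
    then show "- c \<le> n \<and> n \<le> b - m"
      by (cases "n + c \<le> 0"; cases "- m - n < - b") (auto simp: L0 W0)
  qed
  have sh: "Sum_any (\<lambda>n. fm (Lam (n + c) \<sigma>) (W (- m - n) \<sigma>)) = S (m - c)" for c m
  proof -
    have "Sum_any (\<lambda>n. fm (Lam (n + c) \<sigma>) (W (- m - n) \<sigma>))
        = Sum_any (\<lambda>n. (\<lambda>k. fm (Lam k \<sigma>) (W (- (m - c) - k) \<sigma>)) (n - (- c)))"
    proof -
      have ar: "\<And>n::int. - (m - c) - (n - - c) = - m - n" "\<And>n::int. n - - c = n + c"
        "\<And>n::int. - (m - c) - (n + c) = - m - n" by arith+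
      show ?thesis by (simp only: ar)
    qed
    also have "\<dots> = S (m - c)" unfolding S_def by (rule Sum_any_shift)
    finally show ?thesis .
  qed
  have inner: "Sum_any (\<lambda>n. fm (phi_inv_mul Lam n \<sigma>) (W (- m - n) \<sigma>))
      = (S (m - 4) - 2 * S m + S (m + 4)) / 16" for m
  proof -
    have e: "fm (phi_inv_mul Lam n \<sigma>) (W (- m - n) \<sigma>) =
        (fm (Lam (n + 4) \<sigma>) (W (- m - n) \<sigma>) - 2 * fm (Lam (n + 0) \<sigma>) (W (- m - n) \<sigma>)
          + fm (Lam (n + - 4) \<sigma>) (W (- m - n) \<sigma>)) / 16" for n
    proof -
      have "fm (phi_inv_mul Lam n \<sigma>) (W (- m - n) \<sigma>) = complex_of_real (1/16) *
          (fm (Lam (n + 4) \<sigma>) (W (- m - n) \<sigma>) - complex_of_real 2 * fm (Lam n \<sigma>) (W (- m - n) \<sigma>)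
            + fm (Lam (n - 4) \<sigma>) (W (- m - n) \<sigma>))"
        unfolding phi_inv_mul_def by (simp only: fm_scaleR_left fm.add_left fm.diff_left)
      moreover have "n + 0 = n" "n + - 4 = n - 4" by simp_all
      ultimately show ?thesis by (simp only:) (simp add: field_simps)
    qed
    have f2: "finite {n. 2 * fm (Lam (n + 0) \<sigma>) (W (- m - n) \<sigma>) \<noteq> 0}" using fin[of 0 m] by simp
    have f3: "finite {n. fm (Lam (n + 4) \<sigma>) (W (- m - n) \<sigma>) - 2 * fm (Lam (n + 0) \<sigma>) (W (- m - n) \<sigma>) \<noteq> 0}"
      by (rule finite_subset[OF _ finite_UnI[OF fin[of 4 m] fin[of 0 m]]]) auto
    have f4: "finite {n. (fm (Lam (n + 4) \<sigma>) (W (- m - n) \<sigma>) - 2 * fm (Lam (n + 0) \<sigma>) (W (- m - n) \<sigma>)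
          + fm (Lam (n + - 4) \<sigma>) (W (- m - n) \<sigma>)) \<noteq> 0}"
      by (rule finite_subset[OF _ finite_UnI[OF f3 fin[of "-4" m]]]) auto
    have "Sum_any (\<lambda>n. fm (phi_inv_mul Lam n \<sigma>) (W (- m - n) \<sigma>))
       = Sum_any (\<lambda>n. (fm (Lam (n + 4) \<sigma>) (W (- m - n) \<sigma>) - 2 * fm (Lam (n + 0) \<sigma>) (W (- m - n) \<sigma>)
          + fm (Lam (n + - 4) \<sigma>) (W (- m - n) \<sigma>)) / 16)" by (simp only: e)
    also have "\<dots> = Sum_any (\<lambda>n. (fm (Lam (n + 4) \<sigma>) (W (- m - n) \<sigma>) - 2 * fm (Lam (n + 0) \<sigma>) (W (- m - n) \<sigma>)
          + fm (Lam (n + - 4) \<sigma>) (W (- m - n) \<sigma>))) / 16"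
      by (rule Sum_any_divide[OF f4])
    also have "\<dots> = (S (m - 4) - 2 * S m + S (m + 4)) / 16"
      apply (subst Sum_any.distrib[OF f3 fin])
      apply (subst Sum_any_diff[OF fin f2])
      apply (subst Sum_any_right_distrib[symmetric, OF fin])
      apply (simp only: sh)
      apply simp
      done
    finally show ?thesis .
  qed
  have "phi_pair fm (phi_inv_mul Lam) W \<sigma> = Sum_any (\<lambda>m. phi_c m * ((S (m - 4) - 2 * S m + S (m + 4)) / 16))"
    unfolding phi_pair_def by (simp only: inner)
  also have "\<dots> = S 0" by (rule tele[OF Sz])
  finally show ?thesis unfolding S_def by simp
qed

end


lemma Sum_any_neg: "Sum_any (\<lambda>a. - g a) = - Sum_any (g :: 'a \<Rightarrow> 'b::ab_group_add)"
proof (cases "finite {a. g a \<noteq> 0}")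
  case True
  have "Sum_any (\<lambda>a. - g a) = sum (\<lambda>a. - g a) {a. g a \<noteq> 0}" by (rule Sum_any_box[OF True]) auto
  moreover have "Sum_any g = sum g {a. g a \<noteq> 0}" by (rule Sum_any_box[OF True]) auto
  ultimately show ?thesis by (simp add: sum_negf)
next
  case False
  then have "\<not> finite {a. - g a \<noteq> 0}" by simp
  with False show ?thesis by (simp add: Sum_any.infinite)
qed

lemma Sum_any_shear:
  fixes G :: "int \<Rightarrow> int \<Rightarrow> 'c::comm_monoid_add"
  assumes fin: "finite {(a,b). G a b \<noteq> 0}"
  shows "Sum_any (\<lambda>a. Sum_any (\<lambda>b. G a b)) = Sum_any (\<lambda>p. Sum_any (\<lambda>b. G (p - b) b))"
proof -
  have "Sum_any (\<lambda>a. Sum_any (\<lambda>b. G a b)) = Sum_any (\<lambda>b. Sum_any (\<lambda>a. G a b))"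
    by (rule Sum_any_swap2[OF fin])
  also have "\<dots> = Sum_any (\<lambda>b. Sum_any (\<lambda>p. G (p - b) b))"
    by (simp only: Sum_any_shift[of "\<lambda>a. G a _"])
  also have "\<dots> = Sum_any (\<lambda>p. Sum_any (\<lambda>b. G (p - b) b))"
  proof (rule Sum_any_swap2)
    have "{(b,p). G (p - b) b \<noteq> 0} \<subseteq> (\<lambda>(a,b). (b, a + b)) ` {(a,b). G a b \<noteq> 0}"
      by (auto simp: image_iff) (metis diff_add_cancel)
    then show "finite {(b,p). G (p - b) b \<noteq> 0}" using finite_subset fin by blast
  qed
  finally show ?thesis .
qed

lemma outer_fin:
  assumes "\<And>m n. g m n \<noteq> 0 \<Longrightarrow> - a \<le> n \<and> - b \<le> - m - n"
  shows "finite {m. phi_c m * Sum_any (g m) \<noteq> 0}"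
proof (rule fin_box1[of _ 4 "a + b"])
  fix m assume nz: "phi_c m * Sum_any (g m) \<noteq> 0"
  then have "4 \<le> m" by (auto simp: phi_c_def split: if_splits)
  moreover have "Sum_any (g m) \<noteq> 0" using nz by auto
  then obtain n where "g m n \<noteq> 0" by (rule Sum_any.not_neutral_obtains_not_neutral)
  then have "m \<le> a + b" using assms by fastforce
  ultimately show "4 \<le> m \<and> m \<le> a + b" by simp
qed

lemma pp_box:
  assumes g: "\<And>m n. g m n \<noteq> 0 \<Longrightarrow> - a \<le> n \<and> - b \<le> - m - n"
  shows "Sum_any (\<lambda>m. phi_c m * Sum_any (g m)) = (\<Sum>m\<in>{4..a+b}. phi_c m * (\<Sum>n\<in>{-a..b}. g m n))"
proof -
  have "Sum_any (\<lambda>m. phi_c m * Sum_any (g m)) = (\<Sum>m\<in>{4..a+b}. phi_c m * Sum_any (g m))"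
  proof (rule Sum_any_box)
    fix m assume nz: "phi_c m * Sum_any (g m) \<noteq> 0"
    then have "4 \<le> m" by (auto simp: phi_c_def split: if_splits)
    moreover have "Sum_any (g m) \<noteq> 0" using nz by auto
  then obtain n where "g m n \<noteq> 0" by (rule Sum_any.not_neutral_obtains_not_neutral)
    then have "m \<le> a + b" using assms by fastforce
    ultimately show "m \<in> {4..a+b}" by simp
  qed simp
  also have "\<dots> = (\<Sum>m\<in>{4..a+b}. phi_c m * (\<Sum>n\<in>{-a..b}. g m n))"
  proof (rule sum.cong[OF refl])
    fix m :: int assume "m \<in> {4..a+b}"
    then have "Sum_any (g m) = (\<Sum>n\<in>{-a..b}. g m n)"
      by (intro Sum_any_box) (use g in fastforce)+
    then show "phi_c m * Sum_any (g m) = phi_c m * (\<Sum>n\<in>{-a..b}. g m n)" by simp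
  qed
  finally show ?thesis .
qed



definition Phi :: "('g \<Rightarrow> 'g \<Rightarrow> complex) \<Rightarrow> (int \<Rightarrow> real \<Rightarrow> 'g) \<Rightarrow> (int \<Rightarrow> real \<Rightarrow> 'g) \<Rightarrow> real \<Rightarrow> complex" where
  "Phi fm u v \<sigma> = Sum_any (\<lambda>m. phi_c m * Sum_any (\<lambda>n. if n < 0 \<and> 0 < m + n then fm (u n \<sigma>) (v (- m - n) \<sigma>) else 0))"

lemma half_add: "(1/2::real) *\<^sub>R (a + a) = (a::'a::real_vector)"
  by (simp add: scaleR_2[symmetric])

context z4 begin

interpretation br: bounded_bilinear br by (rule br_bb)
interpretation fm: bounded_bilinear fm by (rule fm_bb)
lemmas [simp] = fm.zero_left fm.zero_right br.zero_left br.zero_right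

lemma Z_neg:
  fixes N Ny :: int and M Y :: "int \<Rightarrow> real \<Rightarrow> 'g"
  assumes M0: "\<And>m. m < - N \<Longrightarrow> M m \<sigma> = 0" and Y0: "\<And>j. j < - Ny \<Longrightarrow> Y j \<sigma> = 0" and n: "n < 0"
  shows "(1/2) *\<^sub>R (loop_br br (Rop M) Y n \<sigma> + loop_br br M (Rop Y) n \<sigma>)
       = - Sum_any (\<lambda>m. if m < 0 \<and> n - m < 0 then br (M m \<sigma>) (Y (n - m) \<sigma>) else 0)"
proof -
  have f1: "finite {m. br (Rop M m \<sigma>) (Y (n - m) \<sigma>) \<noteq> 0}"
    apply (rule fin_box1[of _ "- N" "n + Ny"])
    subgoal for m by (cases "m < - N"; cases "n - m < - Ny") (auto simp: Rop_def M0 Y0 cong: if_cong)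
    done
  have f2: "finite {m. br (M m \<sigma>) (Rop Y (n - m) \<sigma>) \<noteq> 0}"
    apply (rule fin_box1[of _ "- N" "n + Ny"])
    subgoal for m by (cases "m < - N"; cases "n - m < - Ny") (auto simp: Rop_def M0 Y0 cong: if_cong)
    done
  have f3: "finite {m. br (Rop M m \<sigma>) (Y (n - m) \<sigma>) + br (M m \<sigma>) (Rop Y (n - m) \<sigma>) \<noteq> 0}"
    by (rule finite_subset[OF _ finite_UnI[OF f1 f2]]) auto
  have per: "(1/2) *\<^sub>R (br (Rop M m \<sigma>) (Y (n - m) \<sigma>) + br (M m \<sigma>) (Rop Y (n - m) \<sigma>))
      = - (if m < 0 \<and> n - m < 0 then br (M m \<sigma>) (Y (n - m) \<sigma>) else 0)" for m
    using n by (auto simp: Rop_def br.minus_left br.minus_right half_add[of "- br (M m \<sigma>) (Y (n - m) \<sigma>)", simplified])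
  have "(1/2) *\<^sub>R (loop_br br (Rop M) Y n \<sigma> + loop_br br M (Rop Y) n \<sigma>)
      = (1/2) *\<^sub>R Sum_any (\<lambda>m. br (Rop M m \<sigma>) (Y (n - m) \<sigma>) + br (M m \<sigma>) (Rop Y (n - m) \<sigma>))"
    unfolding loop_br_def by (simp add: Sum_any.distrib[OF f1 f2])
  also have "\<dots> = Sum_any (\<lambda>m. (1/2) *\<^sub>R (br (Rop M m \<sigma>) (Y (n - m) \<sigma>) + br (M m \<sigma>) (Rop Y (n - m) \<sigma>)))"
    by (rule Sum_any_lin[OF bounded_linear_scaleR_right f3])
  also have "\<dots> = - Sum_any (\<lambda>m. if m < 0 \<and> n - m < 0 then br (M m \<sigma>) (Y (n - m) \<sigma>) else 0)"
    by (simp only: per Sum_any_neg)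
  finally show ?thesis .
qed

lemma pair_Z:
  fixes N :: int and M Y Lam Z :: "int \<Rightarrow> real \<Rightarrow> 'g"
  assumes L0: "\<And>k. k \<le> 0 \<Longrightarrow> Lam k \<sigma> = 0" and M0: "\<And>m. m < - N \<Longrightarrow> M m \<sigma> = 0"
    and Zeq: "\<And>n. n < 0 \<Longrightarrow> Z n \<sigma> = - Sum_any (\<lambda>m. if m < 0 \<and> n - m < 0 then br (M m \<sigma>) (Y (n - m) \<sigma>) else 0)"
  shows "Sum_any (\<lambda>k. fm (Lam k \<sigma>) (Z (- k) \<sigma>)) =
    - Sum_any (\<lambda>k. Sum_any (\<lambda>m. if m < 0 \<and> 0 < k + m then fm (br (Lam k \<sigma>) (M m \<sigma>)) (Y (- k - m) \<sigma>) else 0))"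
proof -
  have per: "fm (Lam k \<sigma>) (Z (- k) \<sigma>) =
     - Sum_any (\<lambda>m. if m < 0 \<and> 0 < k + m then fm (br (Lam k \<sigma>) (M m \<sigma>)) (Y (- k - m) \<sigma>) else 0)" for k
  proof (cases "k \<le> 0")
    case True
    then have "Lam k \<sigma> = 0" by (rule L0)
    then show ?thesis by (simp cong: if_cong)
  next
    case False
    let ?g = "\<lambda>m. if m < 0 \<and> - k - m < 0 then br (M m \<sigma>) (Y (- k - m) \<sigma>) else 0"
    have fg: "finite {m. ?g m \<noteq> 0}"
      apply (rule fin_box1[of _ "- N" "-1"])
      subgoal for m by (cases "m < - N") (auto simp: M0 split: if_splits)
      done
    have "fm (Lam k \<sigma>) (Z (- k) \<sigma>) = - fm (Lam k \<sigma>) (Sum_any ?g)"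
      using False by (simp add: Zeq fm.minus_right)
    also have "fm (Lam k \<sigma>) (Sum_any ?g) = Sum_any (\<lambda>m. fm (Lam k \<sigma>) (?g m))"
      by (rule Sum_any_lin[OF fm.bounded_linear_right fg])
    also have "\<dots> = Sum_any (\<lambda>m. if m < 0 \<and> 0 < k + m then fm (br (Lam k \<sigma>) (M m \<sigma>)) (Y (- k - m) \<sigma>) else 0)"
      by (rule Sum_any.cong) (auto simp: fm_inv)
    finally show ?thesis .
  qed
  show ?thesis by (simp only: per Sum_any_neg)
qed

lemma pp_R:
  fixes N Nw :: int and M W :: "int \<Rightarrow> real \<Rightarrow> 'g"
  assumes M0: "\<And>m. m < - N \<Longrightarrow> M m \<sigma> = 0" and W0: "\<And>j. j < - Nw \<Longrightarrow> W j \<sigma> = 0"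
  shows "phi_pair fm (Rop M) W \<sigma> + phi_pair fm M (Rop W) \<sigma> = - 2 * Phi fm M W \<sigma>"
proof -
  let ?A = "\<lambda>m n. fm (Rop M n \<sigma>) (W (- m - n) \<sigma>)"
  let ?B = "\<lambda>m n. fm (M n \<sigma>) (Rop W (- m - n) \<sigma>)"
  let ?C = "\<lambda>m n. if n < 0 \<and> 0 < m + n then fm (M n \<sigma>) (W (- m - n) \<sigma>) else 0"
  have bA: "?A m n \<noteq> 0 \<Longrightarrow> - N \<le> n \<and> - Nw \<le> - m - n" for m n
    by (cases "n < - N"; cases "- m - n < - Nw") (auto simp: Rop_def M0 W0 cong: if_cong)
  have bB: "?B m n \<noteq> 0 \<Longrightarrow> - N \<le> n \<and> - Nw \<le> - m - n" for m n
    by (cases "n < - N"; cases "- m - n < - Nw") (auto simp: Rop_def M0 W0 cong: if_cong)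
  have bC: "?C m n \<noteq> 0 \<Longrightarrow> - N \<le> n \<and> - Nw \<le> - m - n" for m n
    by (cases "n < - N"; cases "- m - n < - Nw") (auto simp: M0 W0 cong: if_cong)
  have fA: "finite {n. ?A m n \<noteq> 0}" for m
    by (rule fin_box1[of _ "- N" "Nw - m"]) (use bA in force)
  have fB: "finite {n. ?B m n \<noteq> 0}" for m
    by (rule fin_box1[of _ "- N" "Nw - m"]) (use bB in force)
  have fC: "finite {n. ?C m n \<noteq> 0}" for m
    by (rule fin_box1[of _ "- N" "Nw - m"]) (use bC in force)
  have oA: "finite {m. phi_c m * Sum_any (?A m) \<noteq> 0}" by (rule outer_fin) (rule bA)
  have oB: "finite {m. phi_c m * Sum_any (?B m) \<noteq> 0}" by (rule outer_fin) (rule bB)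
  have oC: "finite {m. phi_c m * Sum_any (?C m) \<noteq> 0}" by (rule outer_fin) (rule bC)
  have per: "phi_c m * Sum_any (?A m) + phi_c m * Sum_any (?B m) = - 2 * (phi_c m * Sum_any (?C m))" for m
  proof (cases "4 \<le> m")
    case False then show ?thesis by (simp add: phi_c_def)
  next
    case True
    have t: "?A m n + ?B m n = - 2 * ?C m n" for n
      using True by (auto simp: Rop_def fm.minus_left fm.minus_right)
    have "Sum_any (?A m) + Sum_any (?B m) = Sum_any (\<lambda>n. ?A m n + ?B m n)"
      by (rule Sum_any.distrib[OF fA fB, symmetric])
    also have "\<dots> = - 2 * Sum_any (?C m)"
      by (simp only: t Sum_any_right_distrib[OF fC])
    finally show ?thesis by (simp add: distrib_left[symmetric])
  qed
  have "phi_pair fm (Rop M) W \<sigma> + phi_pair fm M (Rop W) \<sigma>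
      = Sum_any (\<lambda>m. phi_c m * Sum_any (?A m) + phi_c m * Sum_any (?B m))"
    unfolding phi_pair_def by (rule Sum_any.distrib[OF oA oB, symmetric])
  also have "\<dots> = Sum_any (\<lambda>m. - 2 * (phi_c m * Sum_any (?C m)))" by (simp only: per)
  also have "\<dots> = - 2 * Phi fm M W \<sigma>"
    unfolding Phi_def by (rule Sum_any_right_distrib[OF oC, symmetric])
  finally show ?thesis .
qed

end


context z4 begin

interpretation br: bounded_bilinear br by (rule br_bb)
interpretation fm: bounded_bilinear fm by (rule fm_bb)
lemmas [simp] = fm.zero_left fm.zero_right br.zero_left br.zero_right

lemma pair_LP:
  fixes N Ny :: int and M dM Y Lam LP :: "int \<Rightarrow> real \<Rightarrow> 'g"
  assumes L0: "\<And>k. k \<le> 0 \<Longrightarrow> Lam k \<sigma> = 0" and M0: "\<And>m. m < - N \<Longrightarrow> M m \<sigma> = 0"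
    and dM0: "\<And>m. m < - N \<Longrightarrow> dM m \<sigma> = 0" and Y0: "\<And>j. j < - Ny \<Longrightarrow> Y j \<sigma> = 0"
    and LP0: "\<And>p. p \<le> 0 \<Longrightarrow> LP p \<sigma> = 0"
    and LP1: "\<And>p. 1 \<le> p \<Longrightarrow> LP p \<sigma> = (\<Sum>m\<in>{-N..-1}. br (Lam (p - m) \<sigma>) (M m \<sigma>))
                 - (\<Sum>n\<in>{-N..-1}. phr (p - n) *\<^sub>R dM n \<sigma>)"
  shows "Sum_any (\<lambda>p. fm (LP p \<sigma>) (Y (- p) \<sigma>)) =
    Sum_any (\<lambda>k. Sum_any (\<lambda>m. if m < 0 \<and> 0 < k + m then fm (br (Lam k \<sigma>) (M m \<sigma>)) (Y (- k - m) \<sigma>) else 0))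
    - Phi fm dM Y \<sigma>"
proof -
  define a where "a p = (if 1 \<le> p then \<Sum>m\<in>{-N..-1}. fm (br (Lam (p - m) \<sigma>) (M m \<sigma>)) (Y (- p) \<sigma>) else 0)" for p
  define c where "c p = (if 1 \<le> p then \<Sum>n\<in>{-N..-1}. complex_of_real (phr (p - n)) * fm (dM n \<sigma>) (Y (- p) \<sigma>) else 0)" for p
  define g where "g k m = (if m < 0 \<and> 0 < k + m then fm (br (Lam k \<sigma>) (M m \<sigma>)) (Y (- k - m) \<sigma>) else 0)" for k m
  define h where "h m n = (if n < 0 \<and> 0 < m + n then fm (dM n \<sigma>) (Y (- m - n) \<sigma>) else 0)" for m n
  have per: "fm (LP p \<sigma>) (Y (- p) \<sigma>) = a p - c p" for p
  proof (cases "1 \<le> p")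
    case True
    then show ?thesis
      by (simp add: LP1 a_def c_def fm.diff_left fm.sum_left fm_scaleR_left)
  next
    case False then show ?thesis by (simp add: LP0 a_def c_def)
  qed
  have fa: "finite {p. a p \<noteq> 0}"
    apply (rule fin_box1[of _ 1 Ny])
    subgoal for p by (cases "Ny < p") (auto simp: a_def Y0 split: if_splits)
    done
  have fc: "finite {p. c p \<noteq> 0}"
    apply (rule fin_box1[of _ 1 Ny])
    subgoal for p by (cases "Ny < p") (auto simp: c_def Y0 split: if_splits)
    done
  have fg: "finite {(k, m). g k m \<noteq> 0}"
    apply (rule fin_box2[of _ 1 "Ny + N" "- N" "-1"])
    subgoal for k m by (cases "m < - N"; cases "- k - m < - Ny") (auto simp: g_def M0 Y0 split: if_splits)
    done
  have fh: "finite {(m, n). phi_c m * h m n \<noteq> 0}"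
    apply (rule fin_box2[of _ 4 "Ny + N" "- N" "-1"])
    subgoal for m n by (cases "n < - N"; cases "- m - n < - Ny") (auto simp: h_def phi_c_def dM0 Y0 split: if_splits)
    done
  have fh1: "finite {n. h m n \<noteq> 0}" for m
    apply (rule fin_box1[of _ "- N" "-1"])
    subgoal for n by (cases "n < - N") (auto simp: h_def dM0 split: if_splits)
    done
  have A: "Sum_any (\<lambda>k. Sum_any (\<lambda>m. g k m)) = Sum_any a"
  proof -
    have "Sum_any (\<lambda>k. Sum_any (\<lambda>m. g k m)) = Sum_any (\<lambda>p. Sum_any (\<lambda>m. g (p - m) m))"
      by (rule Sum_any_shear[OF fg])
    also have "\<dots> = Sum_any a"
    proof (rule Sum_any.cong)
      fix p
      show "Sum_any (\<lambda>m. g (p - m) m) = a p"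
      proof (cases "1 \<le> p")
        case True
        have "Sum_any (\<lambda>m. g (p - m) m) = (\<Sum>m\<in>{-N..-1}. g (p - m) m)"
          apply (rule Sum_any_box, simp)
          subgoal for m by (cases "m < - N") (auto simp: g_def M0 split: if_splits)
          done
        also have "\<dots> = a p" using True by (auto simp: a_def g_def intro!: sum.cong)
        finally show ?thesis .
      next
        case False then show ?thesis by (simp add: a_def g_def)
      qed
    qed
    finally show ?thesis .
  qed
  have C: "Phi fm dM Y \<sigma> = Sum_any c"
  proof -
    have "Phi fm dM Y \<sigma> = Sum_any (\<lambda>m. Sum_any (\<lambda>n. phi_c m * h m n))"
      unfolding Phi_def h_def[symmetric] by (simp only: Sum_any_right_distrib[OF fh1])
    also have "\<dots> = Sum_any (\<lambda>p. Sum_any (\<lambda>n. phi_c (p - n) * h (p - n) n))"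
      by (rule Sum_any_shear[OF fh])
    also have "\<dots> = Sum_any c"
    proof (rule Sum_any.cong)
      fix p
      show "Sum_any (\<lambda>n. phi_c (p - n) * h (p - n) n) = c p"
      proof (cases "1 \<le> p")
        case True
        have "Sum_any (\<lambda>n. phi_c (p - n) * h (p - n) n) = (\<Sum>n\<in>{-N..-1}. phi_c (p - n) * h (p - n) n)"
          apply (rule Sum_any_box, simp)
          subgoal for n by (cases "n < - N") (auto simp: h_def dM0 split: if_splits)
          done
        also have "\<dots> = c p" using True by (auto simp: c_def h_def phi_c_phr intro!: sum.cong)
        finally show ?thesis .
      next
        case False then show ?thesis by (simp add: c_def h_def)
      qed
    qed
    finally show ?thesis .
  qed
  have "Sum_any (\<lambda>p. fm (LP p \<sigma>) (Y (- p) \<sigma>)) = Sum_any a - Sum_any c"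
    by (simp only: per Sum_any_diff[OF fa fc])
  also have "\<dots> = Sum_any (\<lambda>k. Sum_any (\<lambda>m. g k m)) - Phi fm dM Y \<sigma>" by (simp only: A C)
  finally show ?thesis unfolding g_def .
qed

end


lemma sm_periodic_vd:
  assumes s: "sm f" and p: "\<And>t. f (t + 2 * pi) = f t"
  shows "vd f (t + 2 * pi) = vd f t"
proof -
  have d1: "((\<lambda>s. s + 2 * pi) has_vector_derivative 1) (at t)"
    using has_vector_derivative_add[OF has_vector_derivative_id has_vector_derivative_const, of "2*pi" "at t"] by simp
  have "((f \<circ> (\<lambda>s. s + 2 * pi)) has_vector_derivative (1 *\<^sub>R vd f (t + 2 * pi))) (at t)"
    by (rule vector_diff_chain_at[OF d1]) (simp add: sm_deriv(1)[OF s])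
  moreover have "f \<circ> (\<lambda>s. s + 2 * pi) = f" using p by (simp add: o_def)
  ultimately have "(f has_vector_derivative vd f (t + 2 * pi)) (at t)" by simp
  from vector_derivative_unique_at[OF this sm_deriv(1)[OF s]] show ?thesis .
qed

lemma sS_sm: "smooth_S1 f \<Longrightarrow> sm f" and sS_per: "smooth_S1 f \<Longrightarrow> f (t + 2 * pi) = f t"
  by (simp_all add: smooth_S1_iff)

lemma sS_vd: "smooth_S1 f \<Longrightarrow> smooth_S1 (vd f)"
  unfolding smooth_S1_iff by (auto intro: sm_periodic_vd sm_deriv)

lemma sS_add: "smooth_S1 f \<Longrightarrow> smooth_S1 g \<Longrightarrow> smooth_S1 (\<lambda>t. f t + g t)"
  unfolding smooth_S1_iff by (auto intro: sm_add)
lemma sS_diff: "smooth_S1 f \<Longrightarrow> smooth_S1 g \<Longrightarrow> smooth_S1 (\<lambda>t. f t - g t)"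
  unfolding smooth_S1_iff by (auto intro: sm_diff)
lemma sS_scaleR: "smooth_S1 f \<Longrightarrow> smooth_S1 (\<lambda>t. c *\<^sub>R f t)"
  unfolding smooth_S1_iff by (auto intro: sm_scaleR)
lemma sS_minus: "smooth_S1 f \<Longrightarrow> smooth_S1 (\<lambda>t. - f t)"
  unfolding smooth_S1_iff by (auto intro: sm_minus)
lemma sS_const: "smooth_S1 (\<lambda>t. c)"
  unfolding smooth_S1_iff by (auto intro: sm_const)
lemma sS_lin: "bounded_linear L \<Longrightarrow> smooth_S1 f \<Longrightarrow> smooth_S1 (\<lambda>t. L (f t))"
  unfolding smooth_S1_iff by (auto intro: sm_lin)
lemma sS_bil: "bounded_bilinear P \<Longrightarrow> smooth_S1 f \<Longrightarrow> smooth_S1 g \<Longrightarrow> smooth_S1 (\<lambda>t. P (f t) (g t))"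
  unfolding smooth_S1_iff by (auto intro: sm_bil)
lemma sS_sum: "finite I \<Longrightarrow> (\<And>i. i \<in> I \<Longrightarrow> smooth_S1 (f i)) \<Longrightarrow> smooth_S1 (\<lambda>t. \<Sum>i\<in>I. f i t)"
  by (induction I rule: finite_induct) (auto intro: sS_const sS_add)
lemma sS_cont: "smooth_S1 f \<Longrightarrow> continuous_on S f"
  by (rule sm_cont[OF sS_sm])

lemma vd_zero: "vd (\<lambda>t. 0) t = 0"
  unfolding vd_def by (rule vector_derivative_at) simp

lemma dsig_vd: "dsig X n = vd (X n)"
  by (simp add: dsig_def vd_def fun_eq_iff)

lemma Rop_fun: "Rop X n = (if n \<ge> 0 then X n else (\<lambda>t. - X n t))"
  by (auto simp: Rop_def fun_eq_iff)

lemma dsig_Rop: assumes "\<And>n. sm (X n)" shows "dsig (Rop X) = Rop (dsig X)"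
proof (intro ext)
  fix n t
  show "dsig (Rop X) n t = Rop (dsig X) n t"
  proof (cases "n \<ge> 0")
    case True then show ?thesis by (simp add: dsig_def Rop_fun Rop_def)
  next
    case False
    have "((\<lambda>t. - X n t) has_vector_derivative - vd (X n) t) (at t)"
      by (rule has_vector_derivative_minus[OF sm_deriv(1)[OF assms]])
    then show ?thesis using False by (simp add: dsig_def Rop_fun Rop_def vector_derivative_at vd_def)
  qed
qed

context z4 begin

interpretation br: bounded_bilinear br by (rule br_bb)
interpretation fm: bounded_bilinear fm by (rule fm_bb)

lemma vd_gcomp:
  assumes s: "sm f" and g: "\<And>t. gcomp pr m (f t) = f t"
  shows "gcomp pr m (vd f t) = vd f t"
proof -
  have "((\<lambda>t. gcomp pr m (f t)) has_vector_derivative gcomp pr m (vd f t)) (at t)"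
    by (rule bounded_linear.has_vector_derivative[OF gc_lin sm_deriv(1)[OF s]])
  then have "(f has_vector_derivative gcomp pr m (vd f t)) (at t)" using g by simp
  from vector_derivative_unique_at[OF this sm_deriv(1)[OF s]] show ?thesis .
qed

lemma phr_eq: "2 \<le> q \<Longrightarrow> phr q = (if 4 dvd q then 4 * of_int q else 0)"
  by (auto simp: phr_def elim!: dvdE)

lemma LP_formula:
  fixes N :: int and M dM :: "int \<Rightarrow> real \<Rightarrow> 'g" and A B :: "real \<Rightarrow> 'g"
  assumes gM: "\<And>m. gcomp pr m (M m \<sigma>) = M m \<sigma>" and gdM: "\<And>m. gcomp pr m (dM m \<sigma>) = dM m \<sigma>"
    and p: "1 \<le> p"
  defines "A' \<equiv> (\<lambda>\<sigma>. \<Sum>m\<in>{-N..-1}. br (A \<sigma>) (M m \<sigma>) - 4 *\<^sub>R dM m \<sigma>)"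
    and "B' \<equiv> (\<lambda>\<sigma>. \<Sum>m\<in>{-N..-1}. br (B \<sigma> - of_int m *\<^sub>R A \<sigma>) (M m \<sigma>) + (4 * of_int m) *\<^sub>R dM m \<sigma>)"
  shows "lax_series pr A' B' p \<sigma> = (\<Sum>m\<in>{-N..-1}. br (lax_series pr A B (p - m) \<sigma>) (M m \<sigma>))
                 - (\<Sum>n\<in>{-N..-1}. phr (p - n) *\<^sub>R dM n \<sigma>)"
proof -
  interpret gc: bounded_linear "gcomp pr k" for k by (rule gc_lin)
  have gbr: "gcomp pr p (br x (M m \<sigma>)) = br (gcomp pr (p - m) x) (M m \<sigma>)" for x m
    using gc_br[of p x m "M m \<sigma>"] gM[of m] by simp
  have gd: "gcomp pr p (dM m \<sigma>) = (if 4 dvd (p - m) then dM m \<sigma> else 0)" for m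
    using gc_gc[of p m "dM m \<sigma>"] gdM[of m] by simp
  have per: "of_int p *\<^sub>R gcomp pr p (br (A \<sigma>) (M m \<sigma>) - 4 *\<^sub>R dM m \<sigma>)
      + gcomp pr p (br (B \<sigma> - of_int m *\<^sub>R A \<sigma>) (M m \<sigma>) + (4 * of_int m) *\<^sub>R dM m \<sigma>)
      = br (lax_series pr A B (p - m) \<sigma>) (M m \<sigma>) - phr (p - m) *\<^sub>R dM m \<sigma>"
    if m: "m \<in> {-N..-1}" for m
  proof -
    have pm: "1 \<le> p - m" "2 \<le> p - m" using m p by auto
    have L: "lax_series pr A B (p - m) \<sigma> = of_int (p - m) *\<^sub>R gcomp pr (p - m) (A \<sigma>) + gcomp pr (p - m) (B \<sigma>)"
      using pm by (simp add: lax_series_def)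
    show ?thesis
      unfolding L phr_eq[OF pm(2)]
      by (simp add: gc.diff gc.add gc.scaleR gbr gd br.diff_left br.add_left br.scaleR_left
          gc.diff[symmetric] algebra_simps)
  qed
  have "lax_series pr A' B' p \<sigma> = of_int p *\<^sub>R gcomp pr p (A' \<sigma>) + gcomp pr p (B' \<sigma>)"
    using p by (simp add: lax_series_def)
  also have "\<dots> = (\<Sum>m\<in>{-N..-1}. of_int p *\<^sub>R gcomp pr p (br (A \<sigma>) (M m \<sigma>) - 4 *\<^sub>R dM m \<sigma>)
      + gcomp pr p (br (B \<sigma> - of_int m *\<^sub>R A \<sigma>) (M m \<sigma>) + (4 * of_int m) *\<^sub>R dM m \<sigma>))"
    unfolding A'_def B'_def by (simp only: blin_sum[OF gc_lin] scaleR_sum_right sum.distrib[symmetric])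
  also have "\<dots> = (\<Sum>m\<in>{-N..-1}. br (lax_series pr A B (p - m) \<sigma>) (M m \<sigma>) - phr (p - m) *\<^sub>R dM m \<sigma>)"
    by (rule sum.cong[OF refl per])
  also have "\<dots> = (\<Sum>m\<in>{-N..-1}. br (lax_series pr A B (p - m) \<sigma>) (M m \<sigma>))
                 - (\<Sum>n\<in>{-N..-1}. phr (p - n) *\<^sub>R dM n \<sigma>)"
    by (simp add: sum_subtractf)
  finally show ?thesis .
qed

end


lemma inG_bound: "in_G pr X \<Longrightarrow> \<exists>N::int. 0 \<le> N \<and> (\<forall>n \<sigma>. n < - N \<longrightarrow> X n \<sigma> = 0)"
  unfolding in_G_def by (metis max.cobounded2 max.cobounded1 neg_le_iff_le order_less_le_trans)

lemma inG_smooth: "in_G pr X \<Longrightarrow> smooth_S1 (X n)" and inG_grade: "in_G pr X \<Longrightarrow> gcomp pr n (X n \<sigma>) = X n \<sigma>"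
  unfolding in_G_def by auto

lemma zero_fun: "(\<And>\<sigma>. X n \<sigma> = 0) \<Longrightarrow> X n = (\<lambda>_. 0)" by (simp add: fun_eq_iff)

lemma vd_bound: "(\<And>\<sigma>. X n \<sigma> = 0) \<Longrightarrow> vd (X n) t = 0"
  using zero_fun[of X n] vd_zero by metis

lemma sS_Rop: "(\<And>n. smooth_S1 (X n)) \<Longrightarrow> smooth_S1 (Rop X n)"
  unfolding Rop_fun by (auto intro: sS_minus)

lemma sS_phi_inv: "(\<And>k. smooth_S1 (F k)) \<Longrightarrow> smooth_S1 (phi_inv_mul F n)"
proof -
  assume F: "\<And>k. smooth_S1 (F k)"
  have "phi_inv_mul F n = (\<lambda>\<sigma>. (1/16) *\<^sub>R (F (n + 4) \<sigma> - 2 *\<^sub>R F n \<sigma> + F (n - 4) \<sigma>))"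
    by (simp add: phi_inv_mul_def fun_eq_iff)
  then show ?thesis by (simp only:) (intro sS_scaleR sS_add sS_diff F)
qed

lemma loop_box:
  fixes X Y :: "int \<Rightarrow> real \<Rightarrow> 'g::real_normed_vector"
  assumes bb: "bounded_bilinear br" and X0: "\<And>m \<sigma>. m < - a \<Longrightarrow> X m \<sigma> = 0" and Y0: "\<And>m \<sigma>. m < - b \<Longrightarrow> Y m \<sigma> = 0"
  shows "loop_br br X Y n \<sigma> = (\<Sum>m\<in>{-a..n+b}. br (X m \<sigma>) (Y (n - m) \<sigma>))"
proof -
  interpret bounded_bilinear br by (rule bb)
  show ?thesis unfolding loop_br_def
    apply (rule Sum_any_box, simp)
    subgoal for m by (cases "m < - a"; cases "n - m < - b") (auto simp: X0 Y0 zero_left zero_right)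
    done
qed

lemma loop_zero:
  fixes X Y :: "int \<Rightarrow> real \<Rightarrow> 'g::real_normed_vector"
  assumes bb: "bounded_bilinear br" and X0: "\<And>m \<sigma>. m < - a \<Longrightarrow> X m \<sigma> = 0" and Y0: "\<And>m \<sigma>. m < - b \<Longrightarrow> Y m \<sigma> = 0"
    and n: "n < - a - b"
  shows "loop_br br X Y n \<sigma> = 0"
proof -
  interpret bounded_bilinear br by (rule bb)
  have "br (X m \<sigma>) (Y (n - m) \<sigma>) = 0" for m
  proof (cases "m < - a")
    case True then show ?thesis by (simp add: X0 zero_left)
  next
    case False
    then have "n - m < - b" using n by linarith
    then show ?thesis by (simp add: Y0 zero_right)
  qed
  then show ?thesis unfolding loop_br_def by simp
qed

lemma sS_loop:
  fixes X Y :: "int \<Rightarrow> real \<Rightarrow> 'g::real_normed_vector"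
  assumes bb: "bounded_bilinear br" and X0: "\<And>m \<sigma>. m < - a \<Longrightarrow> X m \<sigma> = 0" and Y0: "\<And>m \<sigma>. m < - b \<Longrightarrow> Y m \<sigma> = 0"
    and sX: "\<And>m. smooth_S1 (X m)" and sY: "\<And>m. smooth_S1 (Y m)"
  shows "smooth_S1 (loop_br br X Y n)"
proof -
  have "loop_br br X Y n = (\<lambda>\<sigma>. \<Sum>m\<in>{-a..n+b}. br (X m \<sigma>) (Y (n - m) \<sigma>))"
    using loop_box[OF bb X0 Y0] by (simp add: fun_eq_iff)
  then show ?thesis by (simp only:) (intro sS_sum sS_bil[OF bb] sX sY finite_atLeastAtMost_int)
qed

context z4 begin

interpretation br: bounded_bilinear br by (rule br_bb)
interpretation fm: bounded_bilinear fm by (rule fm_bb)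
lemmas [simp] = fm.zero_left fm.zero_right br.zero_left br.zero_right

lemma sS_lax: "smooth_S1 A \<Longrightarrow> smooth_S1 B \<Longrightarrow> smooth_S1 (lax_series pr A B k)"
proof -
  assume A: "smooth_S1 A" and B: "smooth_S1 B"
  show ?thesis
  proof (cases "1 \<le> k")
    case True
    then have "lax_series pr A B k = (\<lambda>\<sigma>. of_int k *\<^sub>R gcomp pr k (A \<sigma>) + gcomp pr k (B \<sigma>))"
      by (simp add: lax_series_def fun_eq_iff)
    then show ?thesis by (simp only:) (intro sS_add sS_scaleR sS_lin[OF gc_lin] A B)
  next
    case False
    then have "lax_series pr A B k = (\<lambda>\<sigma>. 0)" by (simp add: lax_series_def fun_eq_iff)
    then show ?thesis by (simp add: sS_const)
  qed
qed

lemma pp_cont: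
  assumes cX: "\<And>n. continuous_on UNIV (X n)" and cY: "\<And>n. continuous_on UNIV (Y n)"
    and X0: "\<And>n \<sigma>. n < - a \<Longrightarrow> X n \<sigma> = 0" and Y0: "\<And>n \<sigma>. n < - b \<Longrightarrow> Y n \<sigma> = 0"
  shows "continuous_on S (phi_pair fm X Y)"
proof -
  have "phi_pair fm X Y = (\<lambda>\<sigma>. \<Sum>m\<in>{4..a+b}. phi_c m * (\<Sum>n\<in>{-a..b}. fm (X n \<sigma>) (Y (- m - n) \<sigma>)))"
  proof (intro ext)
    fix \<sigma>
    show "phi_pair fm X Y \<sigma> = (\<Sum>m\<in>{4..a+b}. phi_c m * (\<Sum>n\<in>{-a..b}. fm (X n \<sigma>) (Y (- m - n) \<sigma>)))"
      unfolding phi_pair_def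
      apply (rule pp_box)
      subgoal for m n by (cases "n < - a"; cases "- m - n < - b") (auto simp: X0 Y0)
      done
  qed
  moreover have "continuous_on S (\<lambda>\<sigma>. \<Sum>m\<in>{4..a+b}. phi_c m * (\<Sum>n\<in>{-a..b}. fm (X n \<sigma>) (Y (- m - n) \<sigma>)))"
    by (intro continuous_on_sum continuous_on_mult_left fm.continuous_on
        continuous_on_subset[OF cX] continuous_on_subset[OF cY] subset_UNIV)
  ultimately show ?thesis by simp
qed

lemma Phi_box:
  assumes X0: "\<And>n \<sigma>. n < - a \<Longrightarrow> X n \<sigma> = 0" and Y0: "\<And>n \<sigma>. n < - b \<Longrightarrow> Y n \<sigma> = 0"
  shows "Phi fm X Y \<sigma> = (\<Sum>m\<in>{4..a+b}. phi_c m * (\<Sum>n\<in>{-a..b}.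
            if n < 0 \<and> 0 < m + n then fm (X n \<sigma>) (Y (- m - n) \<sigma>) else 0))"
  unfolding Phi_def
  apply (rule pp_box)
  subgoal for m n by (cases "n < - a"; cases "- m - n < - b") (auto simp: X0 Y0 split: if_splits)
  done

lemma Phi_deriv:
  assumes sX: "\<And>n. sm (X n)" and sY: "\<And>n. sm (Y n)"
    and X0: "\<And>n \<sigma>. n < - a \<Longrightarrow> X n \<sigma> = 0" and Y0: "\<And>n \<sigma>. n < - b \<Longrightarrow> Y n \<sigma> = 0"
  shows "(Phi fm X Y has_vector_derivative
            (Phi fm X (\<lambda>n. vd (Y n)) t + Phi fm (\<lambda>n. vd (X n)) Y t)) (at t)"
proof -
  have dX0: "\<And>n \<sigma>. n < - a \<Longrightarrow> vd (X n) \<sigma> = 0" using X0 by (intro vd_bound) auto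
  have dY0: "\<And>n \<sigma>. n < - b \<Longrightarrow> vd (Y n) \<sigma> = 0" using Y0 by (intro vd_bound) auto
  let ?T = "\<lambda>m n \<sigma>. if n < 0 \<and> 0 < m + n then fm (X n \<sigma>) (Y (- m - n) \<sigma>) else 0"
  let ?D = "\<lambda>m n. if n < 0 \<and> 0 < m + n then fm (X n t) (vd (Y (- m - n)) t) + fm (vd (X n) t) (Y (- m - n) t) else 0"
  have e: "Phi fm X Y = (\<lambda>\<sigma>. \<Sum>m\<in>{4..a+b}. phi_c m * (\<Sum>n\<in>{-a..b}. ?T m n \<sigma>))"
    using Phi_box[OF X0 Y0] by (simp add: fun_eq_iff)
  have dT: "((\<lambda>\<sigma>. ?T m n \<sigma>) has_vector_derivative ?D m n) (at t)" for m n
  proof (cases "n < 0 \<and> 0 < m + n")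
    case True
    have "((\<lambda>\<sigma>. fm (X n \<sigma>) (Y (- m - n) \<sigma>)) has_vector_derivative
        fm (X n t) (vd (Y (- m - n)) t) + fm (vd (X n) t) (Y (- m - n) t)) (at t)"
      by (rule fm.has_vector_derivative[OF sm_deriv(1)[OF sX] sm_deriv(1)[OF sY]])
    then show ?thesis using True by simp
  next
    case False then show ?thesis by (simp only: if_not_P[OF False]) simp
  qed
  have D1: "(Phi fm X Y has_vector_derivative (\<Sum>m\<in>{4..a+b}. phi_c m * (\<Sum>n\<in>{-a..b}. ?D m n))) (at t)"
    unfolding e by (intro has_vector_derivative_sum has_vector_derivative_mult_right dT)
  have b1: "Phi fm X (\<lambda>n. vd (Y n)) t = (\<Sum>m\<in>{4..a+b}. phi_c m * (\<Sum>n\<in>{-a..b}.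
            if n < 0 \<and> 0 < m + n then fm (X n t) (vd (Y (- m - n)) t) else 0))"
    by (rule Phi_box[OF X0 dY0])
  have b2: "Phi fm (\<lambda>n. vd (X n)) Y t = (\<Sum>m\<in>{4..a+b}. phi_c m * (\<Sum>n\<in>{-a..b}.
            if n < 0 \<and> 0 < m + n then fm (vd (X n) t) (Y (- m - n) t) else 0))"
    by (rule Phi_box[OF dX0 Y0])
  have "(\<Sum>n\<in>{-a..b}. ?D m n) = (\<Sum>n\<in>{-a..b}. if n < 0 \<and> 0 < m + n then fm (X n t) (vd (Y (- m - n)) t) else 0)
      + (\<Sum>n\<in>{-a..b}. if n < 0 \<and> 0 < m + n then fm (vd (X n) t) (Y (- m - n) t) else 0)" for m
    by (simp only: sum.distrib[symmetric]) (rule sum.cong, auto)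
  then have EQ: "(\<Sum>m\<in>{4..a+b}. phi_c m * (\<Sum>n\<in>{-a..b}. ?D m n)) =
      Phi fm X (\<lambda>n. vd (Y n)) t + Phi fm (\<lambda>n. vd (X n)) Y t"
    unfolding b1 b2 by (simp only: distrib_left sum.distrib)
  show ?thesis using D1 unfolding EQ .
qed

end


context z4 begin

interpretation br: bounded_bilinear br by (rule br_bb)
interpretation fm: bounded_bilinear fm by (rule fm_bb)

lemma part1:
  fixes M :: "int \<Rightarrow> real \<Rightarrow> 'g" and A B :: "real \<Rightarrow> 'g" and c :: complex
  assumes M: "in_G pr M" and sA: "smooth_S1 A" and sB: "smooth_S1 B"
  shows "\<exists>L'. S_form pr L' \<and> (\<forall>Y b. in_G pr Y \<longrightarrow>
     hat_pair fm (L', 0) (Y, b) = - hat_pair fm (phi_inv_mul (lax_series pr A B), 1) (hat_brR br fm (M, c) (Y, b)))"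
proof -
  obtain N where N0: "0 \<le> N" and M0: "\<And>n \<sigma>. n < - N \<Longrightarrow> M n \<sigma> = 0" using inG_bound[OF M] by blast
  have sM: "\<And>n. smooth_S1 (M n)" and gM: "\<And>n \<sigma>. gcomp pr n (M n \<sigma>) = M n \<sigma>"
    using inG_smooth[OF M] inG_grade[OF M] by auto
  define dM where "dM = (\<lambda>n. vd (M n))"
  have dsigM: "dsig M = dM" by (simp add: dsig_vd dM_def fun_eq_iff)
  have sdM: "\<And>n. smooth_S1 (dM n)" by (simp add: dM_def sS_vd sM)
  have gdM: "\<And>n \<sigma>. gcomp pr n (dM n \<sigma>) = dM n \<sigma>" unfolding dM_def by (rule vd_gcomp[OF sS_sm[OF sM] gM])
  have dM0: "\<And>n \<sigma>. n < - N \<Longrightarrow> dM n \<sigma> = 0" unfolding dM_def by (rule vd_bound) (simp add: M0)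
  define A' where "A' \<equiv> (\<lambda>\<sigma>. \<Sum>m\<in>{-N..-1}. br (A \<sigma>) (M m \<sigma>) - 4 *\<^sub>R dM m \<sigma>)"
  define B' where "B' \<equiv> (\<lambda>\<sigma>. \<Sum>m\<in>{-N..-1}. br (B \<sigma> - of_int m *\<^sub>R A \<sigma>) (M m \<sigma>) + (4 * of_int m) *\<^sub>R dM m \<sigma>)"
  define L' where "L' = phi_inv_mul (lax_series pr A' B')"
  define L where "L = phi_inv_mul (lax_series pr A B)"
  define Lam where "Lam = lax_series pr A B"
  define LP where "LP = lax_series pr A' B'"
  have sA': "smooth_S1 A'" unfolding A'_def
    by (intro sS_sum finite_atLeastAtMost_int sS_diff sS_bil[OF br_bb] sS_scaleR sA sM sdM)
  have sB': "smooth_S1 B'" unfolding B'_def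
    by (intro sS_sum finite_atLeastAtMost_int sS_add sS_diff sS_bil[OF br_bb] sS_scaleR sA sB sM sdM)
  have SL': "S_form pr L'" unfolding S_form_def L'_def using sA' sB' by blast
  have Lam0: "\<And>k \<sigma>. k \<le> 0 \<Longrightarrow> Lam k \<sigma> = 0" by (simp add: Lam_def lax_series_def)
  have LP0: "\<And>k \<sigma>. k \<le> 0 \<Longrightarrow> LP k \<sigma> = 0" by (simp add: LP_def lax_series_def)
  have LP1: "\<And>p \<sigma>. 1 \<le> p \<Longrightarrow> LP p \<sigma> = (\<Sum>m\<in>{-N..-1}. br (Lam (p - m) \<sigma>) (M m \<sigma>))
                 - (\<Sum>n\<in>{-N..-1}. phr (p - n) *\<^sub>R dM n \<sigma>)"
    unfolding LP_def Lam_def A'_def B'_def by (rule LP_formula[OF gM gdM])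
  have RM0: "\<And>n \<sigma>. n < - N \<Longrightarrow> Rop M n \<sigma> = 0" by (simp add: Rop_def M0)
  have sRM: "\<And>n. smooth_S1 (Rop M n)" by (rule sS_Rop[OF sM])
  have L0: "\<And>n \<sigma>. n < - 3 \<Longrightarrow> L n \<sigma> = 0" by (simp add: L_def phi_inv_mul_def lax_series_def)
  have sL: "\<And>n. smooth_S1 (L n)" unfolding L_def by (intro sS_phi_inv sS_lax sA sB)
  have pM: "\<And>n. M n (2 * pi) = M n 0" using sS_per[OF sM, of _ 0] by simp
  show ?thesis
  proof (intro exI conjI allI impI)
    show "S_form pr L'" by (rule SL')
    fix Y :: "int \<Rightarrow> real \<Rightarrow> 'g" and b :: complex
    assume Y: "in_G pr Y"
    obtain Ny where Ny0: "0 \<le> Ny" and Y0: "\<And>n \<sigma>. n < - Ny \<Longrightarrow> Y n \<sigma> = 0" using inG_bound[OF Y] by blast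
    have sY: "\<And>n. smooth_S1 (Y n)" using inG_smooth[OF Y] by auto
    define dY where "dY = (\<lambda>n. vd (Y n))"
    have dsigY: "dsig Y = dY" by (simp add: dsig_vd dY_def fun_eq_iff)
    have sdY: "\<And>n. smooth_S1 (dY n)" by (simp add: dY_def sS_vd sY)
    have dY0: "\<And>n \<sigma>. n < - Ny \<Longrightarrow> dY n \<sigma> = 0" unfolding dY_def by (rule vd_bound) (simp add: Y0)
    have dsigRY: "dsig (Rop Y) = Rop dY" using dsig_Rop[of Y] sS_sm[OF sY] dsigY by simp
    have RY0: "\<And>n \<sigma>. n < - Ny \<Longrightarrow> Rop Y n \<sigma> = 0" by (simp add: Rop_def Y0)
    have RdY0: "\<And>n \<sigma>. n < - Ny \<Longrightarrow> Rop dY n \<sigma> = 0" by (simp add: Rop_def dY0)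
    have sRY: "\<And>n. smooth_S1 (Rop Y n)" by (rule sS_Rop[OF sY])
    have sRdY: "\<And>n. smooth_S1 (Rop dY n)" by (rule sS_Rop[OF sdY])
    have pY: "\<And>n. Y n (2 * pi) = Y n 0" using sS_per[OF sY, of _ 0] by simp
    define Z where "Z = (\<lambda>n \<sigma>. (1/2) *\<^sub>R (loop_br br (Rop M) Y n \<sigma> + loop_br br M (Rop Y) n \<sigma>))"
    have hb: "hat_brR br fm (M, c) (Y, b) = (Z, (omega fm (Rop M) Y + omega fm M (Rop Y)) / 2)"
      by (simp add: hat_brR_def hat_br_def hat_R_def Z_def Let_def)
    have Z0: "\<And>n \<sigma>. n < - (N + Ny) \<Longrightarrow> Z n \<sigma> = 0"
      unfolding Z_def using loop_zero[OF br_bb RM0 Y0] loop_zero[OF br_bb M0 RY0] by simp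
    have sZ: "\<And>n. smooth_S1 (Z n)"
      unfolding Z_def by (intro sS_scaleR sS_add sS_loop[OF br_bb RM0 Y0 sRM sY] sS_loop[OF br_bb M0 RY0 sM sRY])
    define T1 where "T1 \<sigma> = Sum_any (\<lambda>k. Sum_any (\<lambda>m. if m < 0 \<and> 0 < k + m then fm (br (Lam k \<sigma>) (M m \<sigma>)) (Y (- k - m) \<sigma>) else 0))" for \<sigma>
    define F' where "F' \<sigma> = Phi fm M dY \<sigma> + Phi fm dM Y \<sigma>" for \<sigma>
    have pt: "phi_pair fm L' Y \<sigma> = - phi_pair fm L Z \<sigma>
        - (phi_pair fm (Rop M) dY \<sigma> + phi_pair fm M (Rop dY) \<sigma>) / 2 - F' \<sigma>" for \<sigma>
    proof -
      have i1: "phi_pair fm (phi_inv_mul LP) Y \<sigma> = Sum_any (\<lambda>k. fm (LP k \<sigma>) (Y (- k) \<sigma>))"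
        by (rule phi_inv_pair[where b=Ny]) (simp_all add: LP0 Y0)
      have f1: "phi_pair fm L' Y \<sigma> = T1 \<sigma> - Phi fm dM Y \<sigma>"
        unfolding L'_def LP_def[symmetric] T1_def i1
        by (rule pair_LP[where N=N and M=M and dM=dM and Y=Y and Ny=Ny and Lam=Lam and LP=LP])
          (simp_all add: Lam0 M0 dM0 Y0 LP0 LP1)
      have Zeq: "\<And>n. n < 0 \<Longrightarrow> Z n \<sigma> = - Sum_any (\<lambda>m. if m < 0 \<and> n - m < 0 then br (M m \<sigma>) (Y (n - m) \<sigma>) else 0)"
        unfolding Z_def by (rule Z_neg[OF M0 Y0])
      have i2: "phi_pair fm (phi_inv_mul Lam) Z \<sigma> = Sum_any (\<lambda>k. fm (Lam k \<sigma>) (Z (- k) \<sigma>))"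
        by (rule phi_inv_pair[where b="N + Ny"]) (simp_all add: Lam0 Z0)
      have g: "phi_pair fm L Z \<sigma> = - T1 \<sigma>"
        unfolding L_def Lam_def[symmetric] T1_def i2
        by (rule pair_Z[where N=N and M=M and Y=Y and Lam=Lam and Z=Z]) (simp_all add: Lam0 M0 Zeq)
      have h: "phi_pair fm (Rop M) dY \<sigma> + phi_pair fm M (Rop dY) \<sigma> = - 2 * Phi fm M dY \<sigma>"
        by (rule pp_R[OF M0 dY0])
      show ?thesis unfolding f1 g h F'_def by simp
    qed
    have cg: "continuous_on {0..2*pi} (phi_pair fm L Z)"
      by (rule pp_cont[OF sS_cont[OF sL] sS_cont[OF sZ] L0 Z0])
    have ch1: "continuous_on {0..2*pi} (phi_pair fm (Rop M) dY)"
      by (rule pp_cont[OF sS_cont[OF sRM] sS_cont[OF sdY] RM0 dY0])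
    have ch2: "continuous_on {0..2*pi} (phi_pair fm M (Rop dY))"
      by (rule pp_cont[OF sS_cont[OF sM] sS_cont[OF sRdY] M0 RdY0])
    have hF: "(F' has_integral (Phi fm M Y (2 * pi) - Phi fm M Y 0)) {0..2*pi}"
    proof (rule fundamental_theorem_of_calculus)
      fix x :: real
      have "(Phi fm M Y has_vector_derivative F' x) (at x)"
        unfolding F'_def dY_def dM_def by (rule Phi_deriv[OF sS_sm[OF sM] sS_sm[OF sY] M0 Y0])
      then show "(Phi fm M Y has_vector_derivative F' x) (at x within {0..2*pi})"
        by (rule has_vector_derivative_at_within)
    qed simp
    have per: "Phi fm M Y (2 * pi) = Phi fm M Y 0" unfolding Phi_def by (simp add: pM pY cong: if_cong)
    let ?Ig = "integral {0..2*pi} (phi_pair fm L Z)"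
    let ?I1 = "integral {0..2*pi} (phi_pair fm (Rop M) dY)"
    let ?I2 = "integral {0..2*pi} (phi_pair fm M (Rop dY))"
    have HI: "((\<lambda>\<sigma>. - phi_pair fm L Z \<sigma> - (phi_pair fm (Rop M) dY \<sigma> + phi_pair fm M (Rop dY) \<sigma>) / 2 - F' \<sigma>)
        has_integral (- ?Ig - (?I1 + ?I2) / 2 - 0)) {0..2*pi}"
      using hF unfolding per
      by (intro has_integral_diff has_integral_neg has_integral_divide has_integral_add
          integrable_integral integrable_continuous_interval cg ch1 ch2) simp_all
    have "phi_pair fm L' Y = (\<lambda>\<sigma>. - phi_pair fm L Z \<sigma> - (phi_pair fm (Rop M) dY \<sigma> + phi_pair fm M (Rop dY) \<sigma>) / 2 - F' \<sigma>)"
      using pt by (simp add: fun_eq_iff)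
    then have IL': "integral {0..2*pi} (phi_pair fm L' Y) = - ?Ig - (?I1 + ?I2) / 2"
      using integral_unique[OF HI] by simp
    show "hat_pair fm (L', 0) (Y, b) = - hat_pair fm (phi_inv_mul (lax_series pr A B), 1) (hat_brR br fm (M, c) (Y, b))"
      unfolding hb L_def[symmetric]
      by (simp add: hat_pair_def G_pair_def omega_def dsigY dsigRY IL')
  qed
qed

lemma part2:
  fixes A1 P1 :: "real \<Rightarrow> 'g"
  assumes "smooth_S1 A1" "smooth_S1 P1"
  shows "(lax_matrix br pr A1 P1, 1) \<in> S_set pr"
proof -
  interpret gc: bounded_linear "gcomp pr k" for k by (rule gc_lin)
  define A where "A = (\<lambda>\<sigma>. 4 *\<^sub>R A1 \<sigma>)"
  define B where "B = (\<lambda>\<sigma>. 8 *\<^sub>R nabla1 br A1 P1 \<sigma>)"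
  have nab: "nabla1 br A1 P1 = (\<lambda>\<sigma>. vd P1 \<sigma> - br (A1 \<sigma>) (P1 \<sigma>))"
    by (simp add: nabla1_def vd_def fun_eq_iff)
  have sA: "smooth_S1 A" unfolding A_def by (intro sS_scaleR assms)
  have sB: "smooth_S1 B" unfolding B_def nab by (intro sS_scaleR sS_diff sS_vd sS_bil[OF br_bb] assms)
  have "lax_matrix br pr A1 P1 = phi_inv_mul (lax_series pr A B)"
    by (simp add: fun_eq_iff lax_matrix_def phi_inv_mul_def lax_series_def A_def B_def gc.scaleR
        algebra_simps)
  then have "S_form pr (lax_matrix br pr A1 P1)" unfolding S_form_def using sA sB by blast
  then show ?thesis unfolding S_set_def by blast
qed

end

theorem proposition1:
  fixes br :: "'g::real_normed_vector \<Rightarrow> 'g \<Rightarrow> 'g"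
    and fm :: "'g \<Rightarrow> 'g \<Rightarrow> complex"
    and pr :: "nat \<Rightarrow> 'g \<Rightarrow> 'g"
  assumes "z4_graded_lie br fm pr"
  shows "(\<forall>M c L. in_G pr M \<and> (L, 1) \<in> S_set pr \<longrightarrow>
            (\<exists>L'. S_form pr L' \<and>
               (\<forall>Y b. in_G pr Y \<longrightarrow>
                  hat_pair fm (L', 0) (Y, b) = - hat_pair fm (L, 1) (hat_brR br fm (M, c) (Y, b)))))
       \<and> (\<forall>A1 P1. smooth_S1 A1 \<and> smooth_S1 P1 \<longrightarrow> (lax_matrix br pr A1 P1, 1) \<in> S_set pr)"
proof -
  interpret z4 br fm pr by (rule z4.intro[OF assms])
  show ?thesis
  proof (intro conjI allI impI)
    fix M :: "int \<Rightarrow> real \<Rightarrow> 'g" and c :: complex and L :: "int \<Rightarrow> real \<Rightarrow> 'g" assume h: "in_G pr M \<and> (L, 1) \<in> S_set pr"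
    then obtain A B where "smooth_S1 A" "smooth_S1 B" "L = phi_inv_mul (lax_series pr A B)"
      unfolding S_set_def S_form_def by blast
    then show "\<exists>L'. S_form pr L' \<and> (\<forall>Y b. in_G pr Y \<longrightarrow>
                  hat_pair fm (L', 0) (Y, b) = - hat_pair fm (L, 1) (hat_brR br fm (M, c) (Y, b)))"
      using part1[of M A B c] h by simp
  next
    fix A1 P1 :: "real \<Rightarrow> 'g" assume "smooth_S1 A1 \<and> smooth_S1 P1"
    then show "(lax_matrix br pr A1 P1, 1) \<in> S_set pr" using part2 by blast
  qed
qed


end
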